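(* For any $n,m\in\mathbb{N}$ and $x_1,\dots,x_m,y_1,\dots,y_m\in\mathcal{S}$, \[\sum_{j=1}^m\|x_j\|_n\|y_j\|_n\leqslant\frac{\pi^2}{6}\Big\|\sum_{j=1}^mx_j^*x_j\Big\|_{2n+1}^{1/4}\Big\|\sum_{j=1}^mx_jx_j^*\Big\|_{2n+1}^{1/4}\Big\|\sum_{j=1}^my_j^*y_j\Big\|_{2n+1}^{1/4}\Big\|\sum_{j=1}^my_jy_j^*\Big\|_{2n+1}^{1/4}.\]
   Context: Let $\mathbb{N}=\{1,2,\dots\}$. Let $s$ be the space of complex sequences $\xi=(\xi_j)_{j\geqslant1}$ with $|\xi|_n:=(\sum_{j}|\xi_j|^2j^{2n})^{1/2}<\infty$ for all $n\in\mathbb{N}$, and let $s'$ be its dual, the space of sequences $\eta$ with $|\eta|_n':=(\sum_j|\eta_j|^2j^{-2n})^{1/2}<\infty$ for some $n$, with pairing $\langle\xi,\eta\rangle=\sum_j\xi_j\overline{\eta_j}$. The noncommutative Schwartz space $\mathcal{S}=L(s',s)$ is the space of continuous linear operators $s'\to s$ with the topology of uniform convergence on bounded sets; it is a $*$-algebra with product $xy:=x\circ\iota\circ y$ ($\iota\colon s\hookrightarrow s'$ the inclusion) and involution given by $\langle x^*\xi,\eta\rangle=\langle\xi,x\eta\rangle$. For $n\in\mathbb{N}$ and $x\in\mathcal{S}$, $\|x\|_n:=\sup\{|x\xi|_n\colon \xi\in s',\ |\xi|_n'\leqslant1\}$ (equivalently the operator norm on $\ell_2$ of $d_nxd_n$,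 where $d_n=\operatorname{diag}(1^n,2^n,3^n,\dots)$). *)

theory Defs
  imports "HOL-Analysis.Analysis"
begin

text \<open>Sequences xi = (xi_j)_{j>=1} are modelled as functions nat => complex,
  where the value at index i represents the entry xi_{i+1} (so the weight of
  index i is (i+1)).\<close>

type_synonym seq = "nat \<Rightarrow> complex"
type_synonym op = "seq \<Rightarrow> seq"


definition wpos :: "nat \<Rightarrow> seq \<Rightarrow> nat \<Rightarrow> real" where
  "wpos n \<xi> i = (cmod (\<xi> i))\<^sup>2 * (real (Suc i)) ^ (2 * n)"

definition wneg :: "nat \<Rightarrow> seq \<Rightarrow> nat \<Rightarrow> real" where
  "wneg n \<xi> i = (cmod (\<xi> i))\<^sup>2 / (real (Suc i)) ^ (2 * n)"

definition snorm :: "nat \<Rightarrow> seq \<Rightarrow> real" where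
  "snorm n \<xi> = sqrt (\<Sum>i. wpos n \<xi> i)"

definition dnorm :: "nat \<Rightarrow> seq \<Rightarrow> real" where
  "dnorm n \<xi> = sqrt (\<Sum>i. wneg n \<xi> i)"

definition s_space :: "seq set" where
  "s_space = {\<xi>. \<forall>n. summable (wpos n \<xi>)}"

definition s_dual :: "seq set" where
  "s_dual = {\<xi>. \<exists>n. summable (wneg n \<xi>)}"

definition Hneg :: "nat \<Rightarrow> seq set" where
  "Hneg k = {\<xi>. summable (wneg k \<xi>)}"

definition pairing :: "seq \<Rightarrow> seq \<Rightarrow> complex" where
  "pairing \<xi> \<eta> = (\<Sum>i. \<xi> i * cnj (\<eta> i))"

text \<open>The noncommutative Schwartz space L(s',s): linear maps s' -> s that are
  continuous for the inductive-limit topology on s' (i.e. continuous on each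
  step H_{-k} into every seminorm of s).  Operators are taken extensional
  (zero outside s') so that they are determined by their action on s'.\<close>
definition Schwartz :: "op set" where
  "Schwartz = {x.
     (\<forall>\<xi>\<in>s_dual. x \<xi> \<in> s_space) \<and>
     (\<forall>\<xi>. \<xi> \<notin> s_dual \<longrightarrow> x \<xi> = (\<lambda>_. 0)) \<and>
     (\<forall>\<xi>\<in>s_dual. \<forall>\<eta>\<in>s_dual. \<forall>a b::complex.
        x (\<lambda>i. a * \<xi> i + b * \<eta> i) = (\<lambda>i. a * x \<xi> i + b * x \<eta> i)) \<and>
     (\<forall>k n. \<exists>C. \<forall>\<xi>\<in>Hneg k. snorm n (x \<xi>) \<le> C * dnorm k \<xi>)}"

text \<open>Product xy = x o iota o y (iota the identity inclusion s into s').\<close>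
definition sprod :: "op \<Rightarrow> op \<Rightarrow> op" where
  "sprod x y = x \<circ> y"

definition adj :: "op \<Rightarrow> op" where
  "adj x = (THE y. y \<in> Schwartz \<and>
     (\<forall>\<xi>\<in>s_dual. \<forall>\<eta>\<in>s_dual. pairing (y \<xi>) \<eta> = pairing \<xi> (x \<eta>)))"

definition opsum :: "(nat \<Rightarrow> op) \<Rightarrow> nat set \<Rightarrow> op" where
  "opsum f A = (\<lambda>\<xi> i. \<Sum>j\<in>A. f j \<xi> i)"

definition opnorm :: "nat \<Rightarrow> op \<Rightarrow> real" where
  "opnorm n x = Sup {snorm n (x \<xi>) | \<xi>. \<xi> \<in> s_dual \<and> \<xi> \<in> Hneg n \<and> dnorm n \<xi> \<le> 1}"

end

theory Submission
  imports Defs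
begin


lemma dom_sum:
  fixes f :: "nat \<Rightarrow> 'a::banach"
  assumes "\<And>n. norm (f n) \<le> g n" "summable g"
  shows "summable f" "summable (\<lambda>n. norm (f n))" "norm (suminf f) \<le> suminf g"
    "infsum f UNIV = suminf f"
proof -
  show sn: "summable (\<lambda>n. norm (f n))"
    by (rule summable_comparison_test'[where g=g and N=0]) (use assms in auto)
  then show "summable f" using summable_norm_cancel by blast
  have "norm (suminf f) \<le> (\<Sum>n. norm (f n))" using summable_norm[OF sn] .
  also have "\<dots> \<le> suminf g" using sn assms by (intro suminf_le) auto
  finally show "norm (suminf f) \<le> suminf g" .
  have "(f has_sum suminf f) UNIV"
    using norm_summable_imp_has_sum[OF sn] \<open>summable f\<close> by (simp add: summable_sums)
  then show "infsum f UNIV = suminf f" by (rule infsumI)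
qed

lemma dsum_swap:
  fixes f :: "nat \<Rightarrow> nat \<Rightarrow> 'a::banach"
  assumes b: "\<And>a b. norm (f a b) \<le> g a * h b" and g: "summable g" and h: "summable h"
    and gn: "\<And>a. 0 \<le> g a" and hn: "\<And>b. 0 \<le> h b"
  shows "(\<Sum>a. \<Sum>b. f a b) = (\<Sum>b. \<Sum>a. f a b)"
proof -
  have hs: "(h has_sum suminf h) UNIV"
    using norm_summable_imp_has_sum[of h] h hn by (simp add: summable_sums)
  have gs: "(\<lambda>a. g a * suminf h) summable_on UNIV"
    using g gn hn by (intro norm_summable_imp_summable_on) (auto intro!: summable_mult2 simp: abs_mult suminf_nonneg h)
  have P: "(\<lambda>(a,b). g a * h b) summable_on Sigma UNIV (\<lambda>_. UNIV)"
    by (rule summable_on_SigmaI[where g="\<lambda>a. g a * suminf h"])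
       (auto intro: has_sum_cmult_right hs gs gn hn mult_nonneg_nonneg)
  have P': "(\<lambda>x. norm (case x of (a,b) \<Rightarrow> g a * h b)) summable_on UNIV \<times> UNIV"
  proof -
    have "(\<lambda>x. norm (case x of (a,b) \<Rightarrow> g a * h b)) = (\<lambda>(a,b). g a * h b)"
      using gn hn by (auto simp: fun_eq_iff abs_mult)
    with P show ?thesis by simp
  qed
  have F: "(\<lambda>x. norm (case x of (a,b) \<Rightarrow> f a b)) summable_on UNIV \<times> UNIV"
    apply (rule Infinite_Sum.abs_summable_on_comparison_test[where g="\<lambda>(a,b). g a * h b"])
    using P' b gn hn by (auto simp: abs_mult)
  have "infsum (\<lambda>a. infsum (\<lambda>b. f a b) UNIV) UNIV = infsum (\<lambda>b. infsum (\<lambda>a. f a b) UNIV) UNIV"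
    by (rule infsum_swap_banach[OF abs_summable_summable[OF F]])
  moreover have i1: "infsum (\<lambda>b. f a b) UNIV = (\<Sum>b. f a b)" for a
    by (rule dom_sum(4)[where g="\<lambda>b. g a * h b"]) (rule b, rule summable_mult[OF h])
  moreover have i2: "infsum (\<lambda>a. f a b) UNIV = (\<Sum>a. f a b)" for b
    by (rule dom_sum(4)[where g="\<lambda>a. g a * h b"]) (rule b, rule summable_mult2[OF g])
  moreover have i3: "infsum (\<lambda>a. (\<Sum>b. f a b)) UNIV = (\<Sum>a. \<Sum>b. f a b)"
  proof (rule dom_sum(4)[where g="\<lambda>a. g a * suminf h"])
    show "summable (\<lambda>a. g a * suminf h)" using g by (rule summable_mult2)
    fix a
    have "norm (\<Sum>b. f a b) \<le> (\<Sum>b. g a * h b)"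
      by (rule dom_sum(3)) (rule b, rule summable_mult[OF h])
    also have "(\<Sum>b. g a * h b) = g a * suminf h" by (rule suminf_mult[OF h])
    finally show "norm (\<Sum>b. f a b) \<le> g a * suminf h" .
  qed
  moreover have i4: "infsum (\<lambda>b. (\<Sum>a. f a b)) UNIV = (\<Sum>b. \<Sum>a. f a b)"
  proof (rule dom_sum(4)[where g="\<lambda>b. suminf g * h b"])
    show "summable (\<lambda>b. suminf g * h b)" using h by (rule summable_mult)
    fix b
    have "norm (\<Sum>a. f a b) \<le> (\<Sum>a. g a * h b)"
      by (rule dom_sum(3)) (rule b, rule summable_mult2[OF g])
    also have "(\<Sum>a. g a * h b) = suminf g * h b" by (rule suminf_mult2[OF g, symmetric])
    finally show "norm (\<Sum>a. f a b) \<le> suminf g * h b" .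
  qed
  ultimately show ?thesis by (simp only: i1 i2 i3 i4)
qed



abbreviation w :: "nat \<Rightarrow> real" where "w i \<equiv> real (Suc i)"

definition ev :: "nat \<Rightarrow> seq" where "ev b = (\<lambda>i. if i = b then 1 else 0)"

lemma wpos_nonneg: "0 \<le> wpos n v i" by (simp add: wpos_def)
lemma wneg_nonneg: "0 \<le> wneg n v i" by (simp add: wneg_def)

lemma wneg_ev: "wneg k (ev b) = (\<lambda>i. if i = b then 1 / w b ^ (2*k) else 0)"
  by (auto simp: wneg_def ev_def fun_eq_iff)

lemma ev_sums: "wneg k (ev b) sums (1 / w b ^ (2*k))"
  unfolding wneg_ev using sums_single[of b "\<lambda>_. 1 / w b ^ (2*k)"] by simp

lemma ev_Hneg: "ev b \<in> Hneg k"
  using ev_sums sums_summable unfolding Hneg_def by blast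

lemma Hneg_dual: "Hneg k \<subseteq> s_dual" by (auto simp: Hneg_def s_dual_def)

lemma ev_dual: "ev b \<in> s_dual" using ev_Hneg Hneg_dual by blast

lemma dnorm_ev: "dnorm k (ev b) = 1 / w b ^ k"
proof -
  have "suminf (wneg k (ev b)) = (1 / w b ^ k)^2"
    using ev_sums[THEN sums_unique] by (simp add: power_divide power_mult[symmetric] mult.commute)
  then show ?thesis by (simp add: dnorm_def)
qed

lemma dual_Hneg: "\<xi> \<in> s_dual \<Longrightarrow> \<exists>k. \<xi> \<in> Hneg k"
  by (auto simp: Hneg_def s_dual_def)

lemma wneg_mono: "k \<le> k' \<Longrightarrow> wneg k' \<xi> i \<le> wneg k \<xi> i"
  unfolding wneg_def
  by (intro divide_left_mono) (auto intro!: power_increasing)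

lemma Hneg_mono: assumes "k \<le> k'" "\<xi> \<in> Hneg k" shows "\<xi> \<in> Hneg k'"
proof -
  have "summable (wneg k \<xi>)" using assms(2) by (simp add: Hneg_def)
  then have "summable (wneg k' \<xi>)"
    by (rule summable_comparison_test'[where N=0]) (use assms(1) in \<open>auto simp: wneg_nonneg wneg_mono\<close>)
  then show ?thesis by (simp add: Hneg_def)
qed

lemma wneg_le_wpos0: "wneg k v i \<le> wpos 0 v i"
proof -
  have d: "1 \<le> w i ^ (2*k)" by (simp add: one_le_power)
  have "(cmod (v i))\<^sup>2 \<le> (cmod (v i))\<^sup>2 * w i ^ (2*k)"
    using mult_left_mono[OF d, of "(cmod (v i))\<^sup>2"] by simp
  then show ?thesis using d by (simp add: wneg_def wpos_def divide_le_eq)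
qed

lemma space_Hneg: assumes "v \<in> s_space" shows "v \<in> Hneg k" "dnorm k v \<le> snorm 0 v"
proof -
  have s0: "summable (wpos 0 v)" using assms by (simp add: s_space_def)
  show s: "v \<in> Hneg k" unfolding Hneg_def mem_Collect_eq
    by (rule summable_comparison_test'[OF s0, where N=0]) (auto simp: wneg_nonneg wneg_le_wpos0)
  have "suminf (wneg k v) \<le> suminf (wpos 0 v)"
    using s s0 by (intro suminf_le) (auto simp: Hneg_def wneg_le_wpos0)
  then show "dnorm k v \<le> snorm 0 v" by (simp add: dnorm_def snorm_def)
qed

lemma space_dual: "v \<in> s_space \<Longrightarrow> v \<in> s_dual"
  using space_Hneg Hneg_dual by blast

lemma coord: assumes "v \<in> s_space" shows "cmod (v a) * w a ^ N \<le> snorm N v"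
proof -
  have s: "summable (wpos N v)" using assms by (simp add: s_space_def)
  have "sum (wpos N v) {a} \<le> suminf (wpos N v)"
    by (rule sum_le_suminf[OF s]) (auto simp: wpos_nonneg)
  then have "wpos N v a \<le> suminf (wpos N v)" by simp
  moreover have "wpos N v a = (cmod (v a) * w a ^ N)^2"
    by (simp add: wpos_def power_mult_distrib power_mult[symmetric] mult.commute)
  ultimately have "sqrt ((cmod (v a) * w a ^ N)^2) \<le> snorm N v"
    unfolding snorm_def by (intro real_sqrt_le_mono) simp
  then show ?thesis by simp
qed

lemma snorm_nonneg: "v \<in> s_space \<Longrightarrow> 0 \<le> snorm n v"
  by (simp add: snorm_def s_space_def suminf_nonneg wpos_nonneg)
lemma dnorm_nonneg_ok: "\<xi> \<in> Hneg k \<Longrightarrow> 0 \<le> dnorm k \<xi>"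
  by (simp add: dnorm_def Hneg_def suminf_nonneg wneg_nonneg)

lemma Sch_map: "x \<in> Schwartz \<Longrightarrow> \<xi> \<in> s_dual \<Longrightarrow> x \<xi> \<in> s_space"
  by (simp add: Schwartz_def)
lemma Sch_zero: "x \<in> Schwartz \<Longrightarrow> \<xi> \<notin> s_dual \<Longrightarrow> x \<xi> = (\<lambda>_. 0)"
  by (simp add: Schwartz_def)
lemma Sch_lin: "x \<in> Schwartz \<Longrightarrow> \<xi> \<in> s_dual \<Longrightarrow> \<eta> \<in> s_dual \<Longrightarrow>
   x (\<lambda>i. a * \<xi> i + b * \<eta> i) = (\<lambda>i. a * x \<xi> i + b * x \<eta> i)"
  by (simp add: Schwartz_def)
lemma Sch_bound: assumes "x \<in> Schwartz"
  shows "\<exists>C\<ge>0. \<forall>\<xi>\<in>Hneg k. snorm n (x \<xi>) \<le> C * dnorm k \<xi>"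
proof -
  have "\<exists>C. \<forall>\<xi>\<in>Hneg k. snorm n (x \<xi>) \<le> C * dnorm k \<xi>"
    using assms by (simp add: Schwartz_def)
  then obtain C where C: "\<forall>\<xi>\<in>Hneg k. snorm n (x \<xi>) \<le> C * dnorm k \<xi>" by blast
  show ?thesis
  proof (intro exI[of _ "max C 0"] conjI ballI)
    fix \<xi> assume "\<xi> \<in> Hneg k"
    with C dnorm_nonneg_ok[OF this] show "snorm n (x \<xi>) \<le> max C 0 * dnorm k \<xi>"
      by (smt (verit) mult_right_mono)
  qed simp
qed

lemma Sch_scale: "x \<in> Schwartz \<Longrightarrow> \<xi> \<in> s_dual \<Longrightarrow> x (\<lambda>i. c * \<xi> i) = (\<lambda>i. c * x \<xi> i)"
  using Sch_lin[of x \<xi> \<xi> c 0] by simp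

lemma entry_bound: assumes "x \<in> Schwartz"
  shows "\<exists>C\<ge>0. \<forall>a b. cmod (x (ev b) a) \<le> C / (w a ^ N * w b ^ M)"
proof -
  obtain C where C: "C \<ge> 0" "\<forall>\<xi>\<in>Hneg M. snorm N (x \<xi>) \<le> C * dnorm M \<xi>"
    using Sch_bound[OF assms] by blast
  show ?thesis
  proof (intro exI[of _ C] conjI allI)
    fix a b
    have "cmod (x (ev b) a) * w a ^ N \<le> snorm N (x (ev b))"
      by (rule coord[OF Sch_map[OF assms ev_dual]])
    also have "\<dots> \<le> C * dnorm M (ev b)" using C(2) ev_Hneg[of b M] by blast
    also have "\<dots> = C / w b ^ M" by (simp add: dnorm_ev)
    finally show "cmod (x (ev b) a) \<le> C / (w a ^ N * w b ^ M)"
      by (simp add: field_simps)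
  qed (use C in auto)
qed



lemma CS_series:
  fixes f g :: "nat \<Rightarrow> real"
  assumes fn: "\<And>i. 0 \<le> f i" and gn: "\<And>i. 0 \<le> g i"
    and fs: "summable (\<lambda>i. (f i)\<^sup>2)" and gs: "summable (\<lambda>i. (g i)\<^sup>2)"
  shows "summable (\<lambda>i. f i * g i)" "(\<Sum>i. f i * g i) \<le> sqrt (\<Sum>i. (f i)\<^sup>2) * sqrt (\<Sum>i. (g i)\<^sup>2)"
proof -
  have le: "f i * g i \<le> ((f i)\<^sup>2 + (g i)\<^sup>2) / 2" for i
  proof -
    have "0 \<le> (f i - g i)\<^sup>2" by simp
    then show ?thesis by (simp add: power2_diff)
  qed
  show sm: "summable (\<lambda>i. f i * g i)"
    by (rule summable_comparison_test'[where N=0 and g="\<lambda>i. ((f i)\<^sup>2 + (g i)\<^sup>2) / 2"])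
       (use fs gs le fn gn in \<open>auto intro!: summable_divide summable_add\<close>)
  show "(\<Sum>i. f i * g i) \<le> sqrt (\<Sum>i. (f i)\<^sup>2) * sqrt (\<Sum>i. (g i)\<^sup>2)"
  proof (rule suminf_le_const[OF sm])
    fix n
    have "(\<Sum>i<n. f i * g i)\<^sup>2 \<le> (\<Sum>i<n. (f i)\<^sup>2) * (\<Sum>i<n. (g i)\<^sup>2)"
      by (rule Cauchy_Schwarz_ineq_sum)
    then have "(\<Sum>i<n. f i * g i) \<le> sqrt ((\<Sum>i<n. (f i)\<^sup>2) * (\<Sum>i<n. (g i)\<^sup>2))"
      by (rule real_le_rsqrt)
    also have "\<dots> = sqrt (\<Sum>i<n. (f i)\<^sup>2) * sqrt (\<Sum>i<n. (g i)\<^sup>2)" by (simp add: real_sqrt_mult)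
    also have "\<dots> \<le> sqrt (\<Sum>i. (f i)\<^sup>2) * sqrt (\<Sum>i. (g i)\<^sup>2)"
    proof (rule mult_mono)
      show "sqrt (\<Sum>i<n. (f i)\<^sup>2) \<le> sqrt (\<Sum>i. (f i)\<^sup>2)"
        by (intro real_sqrt_le_mono sum_le_suminf[OF fs]) auto
      show "sqrt (\<Sum>i<n. (g i)\<^sup>2) \<le> sqrt (\<Sum>i. (g i)\<^sup>2)"
        by (intro real_sqrt_le_mono sum_le_suminf[OF gs]) auto
    qed (auto intro!: sum_nonneg suminf_nonneg gs fs)
    finally show "(\<Sum>i<n. f i * g i) \<le> sqrt (\<Sum>i. (f i)\<^sup>2) * sqrt (\<Sum>i. (g i)\<^sup>2)" .
  qed
qed

lemma pair_bound:
  assumes "\<xi> \<in> Hneg k" "v \<in> s_space"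
  shows "summable (\<lambda>i. norm (\<xi> i * cnj (v i)))" "cmod (pairing \<xi> v) \<le> dnorm k \<xi> * snorm k v"
proof -
  define f where "f i = cmod (\<xi> i) / w i ^ k" for i
  define g where "g i = cmod (v i) * w i ^ k" for i
  have f2: "(\<lambda>i. (f i)\<^sup>2) = wneg k \<xi>"
    by (auto simp: fun_eq_iff f_def wneg_def power_divide power_mult[symmetric] mult.commute)
  have g2: "(\<lambda>i. (g i)\<^sup>2) = wpos k v"
    by (auto simp: fun_eq_iff g_def wpos_def power_mult_distrib power_mult[symmetric] mult.commute)
  have fg: "(\<lambda>i. norm (\<xi> i * cnj (v i))) = (\<lambda>i. f i * g i)"
    by (auto simp: fun_eq_iff f_def g_def norm_mult)
  have fs: "summable (\<lambda>i. (f i)\<^sup>2)" using assms(1) by (simp add: f2 Hneg_def)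
  have gs: "summable (\<lambda>i. (g i)\<^sup>2)" using assms(2) by (simp add: g2 s_space_def)
  note cs = CS_series[of f g, OF _ _ fs gs]
  show sm: "summable (\<lambda>i. norm (\<xi> i * cnj (v i)))" unfolding fg using cs(1) by (simp add: f_def g_def)
  have "cmod (pairing \<xi> v) \<le> (\<Sum>i. norm (\<xi> i * cnj (v i)))"
    unfolding pairing_def by (rule summable_norm[OF sm])
  also have "\<dots> \<le> sqrt (\<Sum>i. (f i)\<^sup>2) * sqrt (\<Sum>i. (g i)\<^sup>2)" unfolding fg
    using cs(2) by (simp add: f_def g_def)
  also have "\<dots> = dnorm k \<xi> * snorm k v" by (simp add: f2 g2 dnorm_def snorm_def)
  finally show "cmod (pairing \<xi> v) \<le> dnorm k \<xi> * snorm k v" .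
qed

lemma finsupp_Hneg: assumes "\<And>i. i \<ge> N \<Longrightarrow> \<xi> i = 0" shows "\<xi> \<in> Hneg k"
proof -
  have "summable (wneg k \<xi>)"
    by (rule summable_finite[of "{..<N}"]) (use assms in \<open>auto simp: wneg_def\<close>)
  then show ?thesis by (simp add: Hneg_def)
qed

definition trunc :: "seq \<Rightarrow> nat \<Rightarrow> seq" where
  "trunc \<eta> N = (\<lambda>i. if i < N then \<eta> i else 0)"

lemma trunc_dual: "trunc \<eta> N \<in> s_dual"
  using finsupp_Hneg[of N "trunc \<eta> N" 0] Hneg_dual by (auto simp: trunc_def)

lemma Sch_0: assumes "x \<in> Schwartz" shows "x (\<lambda>i. 0) = (\<lambda>i. 0)"
  using Sch_lin[OF assms ev_dual ev_dual, of 0 0 0 0] by simp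

lemma trunc_rep: assumes "x \<in> Schwartz"
  shows "x (trunc \<eta> N) = (\<lambda>a. \<Sum>b<N. \<eta> b * x (ev b) a)"
proof (induction N)
  case 0
  then show ?case using Sch_0[OF assms] by (simp add: trunc_def)
next
  case (Suc N)
  have "trunc \<eta> (Suc N) = (\<lambda>i. 1 * trunc \<eta> N i + \<eta> N * ev N i)"
    by (auto simp: fun_eq_iff trunc_def ev_def less_Suc_eq)
  then have "x (trunc \<eta> (Suc N)) = (\<lambda>i. 1 * x (trunc \<eta> N) i + \<eta> N * x (ev N) i)"
    using Sch_lin[OF assms trunc_dual ev_dual, of 1 \<eta> N "\<eta> N" N] by simp
  then show ?case using Suc by simp
qed

lemma rep: assumes x: "x \<in> Schwartz" and eta: "\<eta> \<in> s_dual"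
  shows "(\<lambda>b. \<eta> b * x (ev b) a) sums (x \<eta> a)"
proof -
  obtain k where k: "\<eta> \<in> Hneg k" using dual_Hneg[OF eta] by blast
  obtain C where C: "C \<ge> 0" "\<forall>\<zeta>\<in>Hneg k. snorm 0 (x \<zeta>) \<le> C * dnorm k \<zeta>"
    using Sch_bound[OF x] by blast
  define D where "D N = (\<lambda>i. 1 * \<eta> i + (-1) * trunc \<eta> N i)" for N
  have D: "D N = (\<lambda>i. if i < N then 0 else \<eta> i)" for N by (auto simp: D_def trunc_def fun_eq_iff)
  have xD: "x (D N) = (\<lambda>i. x \<eta> i - x (trunc \<eta> N) i)" for N
    unfolding D_def using Sch_lin[OF x eta trunc_dual, of 1 "-1"] by simp
  have sk: "summable (wneg k \<eta>)" using k by (simp add: Hneg_def)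
  have wD: "wneg k (D N) = (\<lambda>i. wneg k \<eta> i - (if i \<in> {..<N} then wneg k \<eta> i else 0))" for N
    by (auto simp: D wneg_def fun_eq_iff)
  have DH: "D N \<in> Hneg k" for N
    unfolding Hneg_def mem_Collect_eq wD
    by (intro summable_diff sk summable_finite[of "{..<N}"]) auto
  have sD: "suminf (wneg k (D N)) = suminf (wneg k \<eta>) - (\<Sum>i<N. wneg k \<eta> i)" for N
    unfolding wD
    using sums_unique[OF sums_diff[OF summable_sums[OF sk] sums_If_finite_set[of "{..<N}" "wneg k \<eta>"]]]
    by simp
  have t0: "(\<lambda>N. suminf (wneg k \<eta>) - (\<Sum>i<N. wneg k \<eta> i)) \<longlonglongrightarrow> 0"
    using tendsto_diff[OF tendsto_const[of "suminf (wneg k \<eta>)"] summable_LIMSEQ[OF sk]] by simp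
  have t1: "(\<lambda>N. C * dnorm k (D N)) \<longlonglongrightarrow> 0"
    unfolding dnorm_def sD using tendsto_mult[OF tendsto_const tendsto_real_sqrt[OF t0], of C] by simp
  have bound: "norm (x \<eta> a - x (trunc \<eta> N) a) \<le> C * dnorm k (D N)" for N
  proof -
    have "cmod (x (D N) a) * w a ^ 0 \<le> snorm 0 (x (D N))"
      by (rule coord[OF Sch_map[OF x]]) (use DH Hneg_dual in blast)
    also have "\<dots> \<le> C * dnorm k (D N)" using C(2) DH by blast
    finally show ?thesis by (simp add: xD)
  qed
  have "(\<lambda>N. x \<eta> a - x (trunc \<eta> N) a) \<longlonglongrightarrow> 0"
    by (rule Lim_null_comparison[OF always_eventually t1]) (use bound in blast)
  from tendsto_diff[OF tendsto_const[of "x \<eta> a"] this]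
  have "(\<lambda>N. x (trunc \<eta> N) a) \<longlonglongrightarrow> x \<eta> a" by simp
  then show ?thesis unfolding sums_def trunc_rep[OF x] by simp
qed



lemma pair_ev: "pairing v (ev i) = v i"
proof -
  have "(\<lambda>j. v j * cnj (ev i j)) = (\<lambda>j. if j = i then v j else 0)"
    by (auto simp: fun_eq_iff ev_def)
  then show ?thesis unfolding pairing_def using sums_unique[OF sums_single[of i v]] by simp
qed

lemma pair_ev2: "pairing (ev i) v = cnj (v i)"
proof -
  have "(\<lambda>j. ev i j * cnj (v j)) = (\<lambda>j. if j = i then cnj (v j) else 0)"
    by (auto simp: fun_eq_iff ev_def)
  then show ?thesis unfolding pairing_def using sums_unique[OF sums_single[of i "\<lambda>j. cnj (v j)"]] by simp
qed

lemma sq_sum_le: "((p::real) + q)\<^sup>2 \<le> 2 * p\<^sup>2 + 2 * q\<^sup>2"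
proof -
  have "0 \<le> (p - q)\<^sup>2" by simp
  then show ?thesis by (simp add: power2_diff power2_sum)
qed

lemma lin_dual: assumes "\<xi> \<in> s_dual" "\<eta> \<in> s_dual"
  shows "(\<lambda>i. a * \<xi> i + b * \<eta> i) \<in> s_dual"
proof -
  obtain k1 k2 where "\<xi> \<in> Hneg k1" "\<eta> \<in> Hneg k2" using assms dual_Hneg by blast
  then have h: "\<xi> \<in> Hneg (max k1 k2)" "\<eta> \<in> Hneg (max k1 k2)"
    by (auto intro: Hneg_mono[OF max.cobounded1] Hneg_mono[OF max.cobounded2])
  define K where "K = max k1 k2"
  have le: "wneg K (\<lambda>i. a * \<xi> i + b * \<eta> i) i \<le> 2 * (cmod a)\<^sup>2 * wneg K \<xi> i + 2 * (cmod b)\<^sup>2 * wneg K \<eta> i" for i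
  proof -
    have "cmod (a * \<xi> i + b * \<eta> i) \<le> cmod a * cmod (\<xi> i) + cmod b * cmod (\<eta> i)"
      using norm_triangle_ineq[of "a * \<xi> i" "b * \<eta> i"] by (simp add: norm_mult)
    then have "(cmod (a * \<xi> i + b * \<eta> i))\<^sup>2 \<le> (cmod a * cmod (\<xi> i) + cmod b * cmod (\<eta> i))\<^sup>2"
      by (intro power_mono) auto
    also have "\<dots> \<le> 2 * (cmod a * cmod (\<xi> i))\<^sup>2 + 2 * (cmod b * cmod (\<eta> i))\<^sup>2" by (rule sq_sum_le)
    finally have "(cmod (a * \<xi> i + b * \<eta> i))\<^sup>2 / w i ^ (2*K) \<le> (2 * (cmod a * cmod (\<xi> i))\<^sup>2 + 2 * (cmod b * cmod (\<eta> i))\<^sup>2) / w i ^ (2*K)"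
      by (intro divide_right_mono) auto
    then show ?thesis by (simp add: wneg_def add_divide_distrib power_mult_distrib)
  qed
  have s1: "summable (\<lambda>i. 2 * (cmod a)\<^sup>2 * wneg K \<xi> i)"
    using h(1) unfolding K_def Hneg_def mem_Collect_eq by (rule summable_mult)
  have s2: "summable (\<lambda>i. 2 * (cmod b)\<^sup>2 * wneg K \<eta> i)"
    using h(2) unfolding K_def Hneg_def mem_Collect_eq by (rule summable_mult)
  have "summable (wneg K (\<lambda>i. a * \<xi> i + b * \<eta> i))"
    by (rule summable_comparison_test'[where N=0, OF summable_add[OF s1 s2]])
       (use le in \<open>auto simp: wneg_nonneg\<close>)
  then show ?thesis unfolding s_dual_def by blast
qed

lemma pair_lin: assumes "\<xi> \<in> s_dual" "\<eta> \<in> s_dual" "v \<in> s_space"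
  shows "pairing (\<lambda>i. a * \<xi> i + b * \<eta> i) v = a * pairing \<xi> v + b * pairing \<eta> v"
proof -
  obtain k1 where k1: "\<xi> \<in> Hneg k1" using dual_Hneg[OF assms(1)] by blast
  obtain k2 where k2: "\<eta> \<in> Hneg k2" using dual_Hneg[OF assms(2)] by blast
  have s1: "summable (\<lambda>i. \<xi> i * cnj (v i))" by (rule summable_norm_cancel[OF pair_bound(1)[OF k1 assms(3)]])
  have s2: "summable (\<lambda>i. \<eta> i * cnj (v i))" by (rule summable_norm_cancel[OF pair_bound(1)[OF k2 assms(3)]])
  have e: "(\<lambda>i. (a * \<xi> i + b * \<eta> i) * cnj (v i)) = (\<lambda>i. a * (\<xi> i * cnj (v i)) + b * (\<eta> i * cnj (v i)))"
    by (simp add: fun_eq_iff distrib_right mult.assoc)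
  have "pairing (\<lambda>i. a * \<xi> i + b * \<eta> i) v = (\<Sum>i. a * (\<xi> i * cnj (v i)) + b * (\<eta> i * cnj (v i)))"
    unfolding pairing_def e ..
  also have "\<dots> = (\<Sum>i. a * (\<xi> i * cnj (v i))) + (\<Sum>i. b * (\<eta> i * cnj (v i)))"
    by (rule suminf_add[OF summable_mult[OF s1] summable_mult[OF s2], symmetric])
  also have "\<dots> = a * pairing \<xi> v + b * pairing \<eta> v"
    unfolding pairing_def suminf_mult[OF s1] suminf_mult[OF s2] ..
  finally show ?thesis .
qed

lemma inv_sq_summable: "summable (\<lambda>i. 1 / (w i)\<^sup>2)" "(\<Sum>i. 1 / (w i)\<^sup>2) = pi\<^sup>2 / 6"
proof -
  have e: "(\<lambda>i. 1 / (w i)\<^sup>2) sums (pi\<^sup>2 / 6)" using inverse_squares_sums by simp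
  show "summable (\<lambda>i. 1 / (w i)\<^sup>2)" by (rule sums_summable[OF e])
  show "(\<Sum>i. 1 / (w i)\<^sup>2) = pi\<^sup>2 / 6" by (rule sums_unique[OF e, symmetric])
qed

lemma HS1: assumes "\<xi> \<in> Hneg k" shows "summable (\<lambda>i. cmod (\<xi> i) / w i ^ (k+1))"
proof -
  define f where "f i = cmod (\<xi> i) / w i ^ k" for i
  define g where "g i = 1 / w i" for i
  have f2: "(\<lambda>i. (f i)\<^sup>2) = wneg k \<xi>"
    by (auto simp: fun_eq_iff f_def wneg_def power_divide power_mult[symmetric] mult.commute)
  have fs: "summable (\<lambda>i. (f i)\<^sup>2)" using assms unfolding f2 by (simp add: Hneg_def)
  have gs: "summable (\<lambda>i. (g i)\<^sup>2)" using inv_sq_summable(1) by (simp add: g_def power_divide)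
  have "summable (\<lambda>i. f i * g i)"
    by (rule CS_series(1)[OF _ _ fs gs]) (simp_all add: f_def g_def)
  then show ?thesis by (simp add: f_def g_def mult.commute)
qed

lemma aux_div: "(t::real) > 0 \<Longrightarrow> c / t^(n+1) * t^n = c / t"
  by (simp add: field_simps)

lemma le_mult_ge1: "(1::real) \<le> b \<Longrightarrow> 0 \<le> a \<Longrightarrow> a \<le> a * b"
proof -
  assume "1 \<le> b" "0 \<le> a"
  then have "a * 1 \<le> a * b" by (rule mult_left_mono)
  then show ?thesis by simp
qed

definition adjc :: "op \<Rightarrow> op" where
  "adjc x = (\<lambda>\<xi>. if \<xi> \<in> s_dual then (\<lambda>i. pairing \<xi> (x (ev i))) else (\<lambda>_. 0))"

lemma adj_core: assumes x: "x \<in> Schwartz"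
  shows "\<exists>C\<ge>0. \<forall>\<xi>\<in>Hneg k. summable (wpos n (\<lambda>i. pairing \<xi> (x (ev i))))
       \<and> snorm n (\<lambda>i. pairing \<xi> (x (ev i))) \<le> C * dnorm k \<xi>"
proof -
  obtain C0 where C0: "C0 \<ge> 0" "\<forall>\<zeta>\<in>Hneg (n+1). snorm k (x \<zeta>) \<le> C0 * dnorm (n+1) \<zeta>"
    using Sch_bound[OF x] by blast
  show ?thesis
  proof (intro exI[of _ "C0 * sqrt (pi\<^sup>2/6)"] conjI ballI)
    show "0 \<le> C0 * sqrt (pi\<^sup>2/6)" using C0 by simp
    fix \<xi> assume xi: "\<xi> \<in> Hneg k"
    define D where "D = dnorm k \<xi>"
    have D0: "0 \<le> D" using dnorm_nonneg_ok[OF xi] by (simp add: D_def)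
    define y where "y i = pairing \<xi> (x (ev i))" for i
    have yb: "cmod (y i) \<le> D * C0 / w i ^ (n+1)" for i
    proof -
      have "cmod (y i) \<le> D * snorm k (x (ev i))"
        unfolding y_def D_def by (rule pair_bound(2)[OF xi Sch_map[OF x ev_dual]])
      also have "\<dots> \<le> D * (C0 * dnorm (n+1) (ev i))"
        using C0(2) ev_Hneg D0 by (intro mult_left_mono) auto
      finally show ?thesis by (simp add: dnorm_ev)
    qed
    have wb: "wpos n y i \<le> (D * C0)\<^sup>2 * (1 / (w i)\<^sup>2)" for i
    proof -
      have "cmod (y i) * w i ^ n \<le> D * C0 / w i ^ (n+1) * w i ^ n"
        using yb by (intro mult_right_mono) auto
      also have "\<dots> = D * C0 / w i" by (rule aux_div) simp
      finally have "(cmod (y i) * w i ^ n)\<^sup>2 \<le> (D * C0 / w i)\<^sup>2"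
        by (intro power_mono) auto
      moreover have "wpos n y i = (cmod (y i) * w i ^ n)\<^sup>2"
        by (simp add: wpos_def power_mult_distrib power_mult[symmetric] mult.commute)
      ultimately show ?thesis by (simp add: power_divide)
    qed
    have sm: "summable (wpos n y)"
      by (rule summable_comparison_test'[where N=0, OF summable_mult[OF inv_sq_summable(1)]])
         (use wb in \<open>auto simp: wpos_nonneg\<close>)
    then show "summable (wpos n (\<lambda>i. pairing \<xi> (x (ev i))))" by (simp add: y_def[abs_def])
    have "suminf (wpos n y) \<le> (\<Sum>i. (D * C0)\<^sup>2 * (1 / (w i)\<^sup>2))"
      by (rule suminf_le[OF wb sm summable_mult[OF inv_sq_summable(1)]])
    also have "\<dots> = (D * C0)\<^sup>2 * (pi\<^sup>2/6)"
      by (subst suminf_mult[OF inv_sq_summable(1)]) (simp only: inv_sq_summable(2))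
    finally have "snorm n y \<le> sqrt ((D * C0)\<^sup>2 * (pi\<^sup>2/6))" unfolding snorm_def
      by (rule real_sqrt_le_mono)
    also have "\<dots> = (D * C0) * sqrt (pi\<^sup>2/6)"
      by (simp only: real_sqrt_mult real_sqrt_abs abs_of_nonneg[OF mult_nonneg_nonneg[OF D0 C0(1)]])
    also have "\<dots> = C0 * sqrt (pi\<^sup>2/6) * D" by (simp only: mult.commute mult.left_commute)
    finally show "snorm n (\<lambda>i. pairing \<xi> (x (ev i))) \<le> C0 * sqrt (pi\<^sup>2/6) * dnorm k \<xi>"
      by (simp add: y_def[abs_def] D_def)
  qed
qed

lemma adjc_eq: "\<xi> \<in> s_dual \<Longrightarrow> adjc x \<xi> = (\<lambda>i. pairing \<xi> (x (ev i)))"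
  by (simp add: adjc_def)

lemma adjc_Sch: assumes x: "x \<in> Schwartz" shows "adjc x \<in> Schwartz"
  unfolding Schwartz_def mem_Collect_eq
proof (intro conjI ballI allI impI)
  fix \<xi> assume xi: "\<xi> \<in> s_dual"
  show "adjc x \<xi> \<in> s_space" unfolding s_space_def mem_Collect_eq
  proof
    fix n
    obtain k where k: "\<xi> \<in> Hneg k" using dual_Hneg[OF xi] by blast
    obtain C where C: "\<forall>\<xi>\<in>Hneg k. summable (wpos n (\<lambda>i. pairing \<xi> (x (ev i))))
       \<and> snorm n (\<lambda>i. pairing \<xi> (x (ev i))) \<le> C * dnorm k \<xi>" using adj_core[OF x, of k n] by blast
    have "summable (wpos n (\<lambda>i. pairing \<xi> (x (ev i))))" using C k by blast
    then show "summable (wpos n (adjc x \<xi>))" by (simp only: adjc_eq[OF xi])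
  qed
next
  fix \<xi> :: seq assume "\<xi> \<notin> s_dual" then show "adjc x \<xi> = (\<lambda>_. 0)" by (simp add: adjc_def)
next
  fix \<xi> \<eta> a b assume xi: "\<xi> \<in> s_dual" and eta: "\<eta> \<in> s_dual"
  have l: "(\<lambda>i. a * \<xi> i + b * \<eta> i) \<in> s_dual" by (rule lin_dual[OF xi eta])
  have "adjc x (\<lambda>i. a * \<xi> i + b * \<eta> i) = (\<lambda>j. pairing (\<lambda>i. a * \<xi> i + b * \<eta> i) (x (ev j)))"
    by (rule adjc_eq[OF l])
  also have "\<dots> = (\<lambda>j. a * pairing \<xi> (x (ev j)) + b * pairing \<eta> (x (ev j)))"
    by (rule ext, rule pair_lin[OF xi eta Sch_map[OF x ev_dual]])
  also have "\<dots> = (\<lambda>j. a * adjc x \<xi> j + b * adjc x \<eta> j)"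
    by (simp only: adjc_eq[OF xi] adjc_eq[OF eta])
  finally show "adjc x (\<lambda>i. a * \<xi> i + b * \<eta> i) = (\<lambda>i. a * adjc x \<xi> i + b * adjc x \<eta> i)" .
next
  fix k n
  obtain C where C: "\<forall>\<xi>\<in>Hneg k. summable (wpos n (\<lambda>i. pairing \<xi> (x (ev i))))
       \<and> snorm n (\<lambda>i. pairing \<xi> (x (ev i))) \<le> C * dnorm k \<xi>" using adj_core[OF x, of k n] by blast
  show "\<exists>C. \<forall>\<xi>\<in>Hneg k. snorm n (adjc x \<xi>) \<le> C * dnorm k \<xi>"
  proof (intro exI[of _ C] ballI)
    fix \<xi> assume k: "\<xi> \<in> Hneg k"
    then have xi: "\<xi> \<in> s_dual" using Hneg_dual[of k] by blast
    have "snorm n (\<lambda>i. pairing \<xi> (x (ev i))) \<le> C * dnorm k \<xi>" using C k by blast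
    then show "snorm n (adjc x \<xi>) \<le> C * dnorm k \<xi>" by (simp only: adjc_eq[OF xi])
  qed
qed

lemma adjc_pair: assumes x: "x \<in> Schwartz" and xi: "\<xi> \<in> s_dual" and eta: "\<eta> \<in> s_dual"
  shows "pairing (adjc x \<xi>) \<eta> = pairing \<xi> (x \<eta>)"
proof -
  obtain k1 where k1: "\<xi> \<in> Hneg k1" using dual_Hneg[OF xi] by blast
  obtain k2 where k2: "\<eta> \<in> Hneg k2" using dual_Hneg[OF eta] by blast
  obtain C where C: "C \<ge> 0" "\<forall>a i. cmod (x (ev i) a) \<le> C / (w a ^ (k1+1) * w i ^ (k2+1))"
    using entry_bound[OF x] by blast
  define g where "g i = C * (cmod (\<eta> i) / w i ^ (k2+1))" for i
  define h where "h a = cmod (\<xi> a) / w a ^ (k1+1)" for a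
  have gs: "summable g" unfolding g_def by (rule summable_mult[OF HS1[OF k2]])
  have hs: "summable h" unfolding h_def by (rule HS1[OF k1])
  have gn: "0 \<le> g i" for i using C by (simp add: g_def)
  have hn: "0 \<le> h a" for a by (simp add: h_def)
  define F where "F i a = \<xi> a * cnj (x (ev i) a) * cnj (\<eta> i)" for i a
  have Fb: "norm (F i a) \<le> g i * h a" for i a
  proof -
    have "norm (F i a) = cmod (\<xi> a) * cmod (x (ev i) a) * cmod (\<eta> i)"
      by (simp add: F_def norm_mult)
    also have "\<dots> \<le> cmod (\<xi> a) * (C / (w a ^ (k1+1) * w i ^ (k2+1))) * cmod (\<eta> i)"
      using C(2) by (intro mult_right_mono mult_left_mono) auto
    also have "\<dots> = g i * h a" by (simp add: g_def h_def field_simps)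
    finally show ?thesis .
  qed
  have inner1: "summable (\<lambda>a. \<xi> a * cnj (x (ev i) a))" for i
  proof -
    have "norm (\<xi> a * cnj (x (ev i) a)) \<le> C * h a" for a
    proof -
      have "norm (\<xi> a * cnj (x (ev i) a)) = cmod (\<xi> a) * cmod (x (ev i) a)" by (simp add: norm_mult)
      also have "\<dots> \<le> cmod (\<xi> a) * (C / (w a ^ (k1+1) * w i ^ (k2+1)))"
        using C(2) by (intro mult_left_mono) auto
      also have "\<dots> \<le> cmod (\<xi> a) * (C / (w a ^ (k1+1)))"
      proof (intro mult_left_mono divide_left_mono)
        show "w a ^ (k1 + 1) \<le> w a ^ (k1 + 1) * w i ^ (k2 + 1)"
          by (rule le_mult_ge1) (rule one_le_power, simp, simp)
      qed (use C in auto)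
      also have "\<dots> = C * h a" by (simp add: h_def)
      finally show ?thesis .
    qed
    then show ?thesis by (rule dom_sum(1)) (rule summable_mult[OF hs])
  qed
  have "pairing (adjc x \<xi>) \<eta> = (\<Sum>i. (\<Sum>a. \<xi> a * cnj (x (ev i) a)) * cnj (\<eta> i))"
    using xi by (simp add: adjc_def pairing_def)
  also have "\<dots> = (\<Sum>i. \<Sum>a. F i a)"
    unfolding F_def using inner1 by (simp add: suminf_mult2)
  also have "\<dots> = (\<Sum>a. \<Sum>i. F i a)" by (rule dsum_swap[OF Fb gs hs gn hn])
  also have "\<dots> = (\<Sum>a. \<xi> a * cnj (x \<eta> a))"
  proof (rule suminf_cong)
    fix a
    have r: "(\<lambda>i. \<eta> i * x (ev i) a) sums (x \<eta> a)" by (rule rep[OF x eta])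
    then have r': "(\<lambda>i. cnj (\<eta> i * x (ev i) a)) sums cnj (x \<eta> a)" by (simp only: sums_cnj)
    have "(\<lambda>i. \<xi> a * cnj (\<eta> i * x (ev i) a)) sums (\<xi> a * cnj (x \<eta> a))"
      by (rule sums_mult[OF r'])
    then show "(\<Sum>i. F i a) = \<xi> a * cnj (x \<eta> a)"
      unfolding F_def by (simp add: sums_iff mult.commute mult.left_commute)
  qed
  also have "\<dots> = pairing \<xi> (x \<eta>)" by (simp add: pairing_def)
  finally show ?thesis .
qed

lemma adj_eq: assumes x: "x \<in> Schwartz" shows "adj x = adjc x"
  unfolding adj_def
proof (rule the_equality)
  show "adjc x \<in> Schwartz \<and> (\<forall>\<xi>\<in>s_dual. \<forall>\<eta>\<in>s_dual. pairing (adjc x \<xi>) \<eta> = pairing \<xi> (x \<eta>))"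
    using adjc_Sch[OF x] adjc_pair[OF x] by blast
next
  fix y assume y: "y \<in> Schwartz \<and> (\<forall>\<xi>\<in>s_dual. \<forall>\<eta>\<in>s_dual. pairing (y \<xi>) \<eta> = pairing \<xi> (x \<eta>))"
  show "y = adjc x"
  proof
    fix \<xi>
    show "y \<xi> = adjc x \<xi>"
    proof (cases "\<xi> \<in> s_dual")
      case True
      show ?thesis
      proof
        fix i
        have "y \<xi> i = pairing (y \<xi>) (ev i)" by (simp add: pair_ev)
        also have "\<dots> = pairing \<xi> (x (ev i))" using y True ev_dual by blast
        finally show "y \<xi> i = adjc x \<xi> i" using True by (simp add: adjc_def)
      qed
    next
      case False
      then show ?thesis using y Sch_zero by (simp add: adjc_def)
    qed
  qed
qed

lemma adj_Sch: "x \<in> Schwartz \<Longrightarrow> adj x \<in> Schwartz"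
  using adj_eq adjc_Sch by simp

lemma adj_pair: "x \<in> Schwartz \<Longrightarrow> \<xi> \<in> s_dual \<Longrightarrow> \<eta> \<in> s_dual \<Longrightarrow> pairing (adj x \<xi>) \<eta> = pairing \<xi> (x \<eta>)"
  using adj_eq adjc_pair by simp



lemma sq_sum_card: "(cmod (\<Sum>j\<in>J. c j))\<^sup>2 \<le> real (card J) * (\<Sum>j\<in>J. (cmod (c j))\<^sup>2)"
proof -
  have "cmod (\<Sum>j\<in>J. c j) \<le> (\<Sum>j\<in>J. 1 * cmod (c j))" using norm_sum[of c J] by simp
  then have "(cmod (\<Sum>j\<in>J. c j))\<^sup>2 \<le> (\<Sum>j\<in>J. 1 * cmod (c j))\<^sup>2"
    by (intro power_mono) auto
  also have "\<dots> \<le> (\<Sum>j\<in>J. 1\<^sup>2) * (\<Sum>j\<in>J. (cmod (c j))\<^sup>2)"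
    by (rule Cauchy_Schwarz_ineq_sum)
  finally show ?thesis by simp
qed

lemma wpos_sum_le: "wpos n (\<lambda>i. \<Sum>j\<in>J. f j i) i \<le> real (card J) * (\<Sum>j\<in>J. wpos n (f j) i)"
proof -
  have "wpos n (\<lambda>i. \<Sum>j\<in>J. f j i) i = (cmod (\<Sum>j\<in>J. f j i))\<^sup>2 * w i ^ (2*n)"
    by (simp add: wpos_def)
  also have "\<dots> \<le> (real (card J) * (\<Sum>j\<in>J. (cmod (f j i))\<^sup>2)) * w i ^ (2*n)"
    by (intro mult_right_mono sq_sum_card) auto
  also have "\<dots> = real (card J) * (\<Sum>j\<in>J. wpos n (f j) i)"
    by (simp add: wpos_def sum_distrib_right mult.assoc)
  finally show ?thesis .
qed

lemma sum_space_bound: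
  assumes fin: "finite J" and sp: "\<And>j. j \<in> J \<Longrightarrow> f j \<in> s_space"
  shows "summable (wpos n (\<lambda>i. \<Sum>j\<in>J. f j i))"
    "suminf (wpos n (\<lambda>i. \<Sum>j\<in>J. f j i)) \<le> real (card J) * (\<Sum>j\<in>J. suminf (wpos n (f j)))"
proof -
  have s: "summable (wpos n (f j))" if "j \<in> J" for j using sp[OF that] by (simp add: s_space_def)
  have s2: "summable (\<lambda>i. real (card J) * (\<Sum>j\<in>J. wpos n (f j) i))"
    by (rule summable_mult[OF summable_sum]) (rule s)
  show s1: "summable (wpos n (\<lambda>i. \<Sum>j\<in>J. f j i))"
    by (rule summable_comparison_test'[where N=0, OF s2]) (auto simp: wpos_nonneg wpos_sum_le)
  have "suminf (wpos n (\<lambda>i. \<Sum>j\<in>J. f j i)) \<le> (\<Sum>i. real (card J) * (\<Sum>j\<in>J. wpos n (f j) i))"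
    by (rule suminf_le[OF _ s1 s2]) (rule wpos_sum_le)
  also have "\<dots> = real (card J) * (\<Sum>j\<in>J. suminf (wpos n (f j)))"
    by (simp add: suminf_mult summable_sum s suminf_sum)
  finally show "suminf (wpos n (\<lambda>i. \<Sum>j\<in>J. f j i)) \<le> real (card J) * (\<Sum>j\<in>J. suminf (wpos n (f j)))" .
qed

lemma sum_space: "finite J \<Longrightarrow> (\<And>j. j \<in> J \<Longrightarrow> f j \<in> s_space) \<Longrightarrow> (\<lambda>i. \<Sum>j\<in>J. f j i) \<in> s_space"
  using sum_space_bound(1) unfolding s_space_def by blast

lemma snorm_sum:
  assumes fin: "finite J" and sp: "\<And>j. j \<in> J \<Longrightarrow> f j \<in> s_space"
    and b: "\<And>j. j \<in> J \<Longrightarrow> snorm n (f j) \<le> K j * D" and K: "\<And>j. 0 \<le> K j" and D: "0 \<le> D"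
  shows "snorm n (\<lambda>i. \<Sum>j\<in>J. f j i) \<le> sqrt (real (card J) * (\<Sum>j\<in>J. (K j)\<^sup>2)) * D"
proof -
  have "suminf (wpos n (\<lambda>i. \<Sum>j\<in>J. f j i)) \<le> real (card J) * (\<Sum>j\<in>J. suminf (wpos n (f j)))"
    by (rule sum_space_bound(2)[OF fin sp])
  also have "\<dots> \<le> real (card J) * (\<Sum>j\<in>J. (K j * D)\<^sup>2)"
  proof (intro mult_left_mono sum_mono)
    fix j assume j: "j \<in> J"
    have nn: "0 \<le> suminf (wpos n (f j))"
      using sp[OF j] by (simp add: s_space_def suminf_nonneg wpos_nonneg)
    have "sqrt (suminf (wpos n (f j))) \<le> K j * D" using b[OF j] by (simp add: snorm_def)
    then have "(sqrt (suminf (wpos n (f j))))\<^sup>2 \<le> (K j * D)\<^sup>2"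
      using nn by (intro power_mono) auto
    then show "suminf (wpos n (f j)) \<le> (K j * D)\<^sup>2" using nn by simp
  qed simp
  also have "\<dots> = (sqrt (real (card J) * (\<Sum>j\<in>J. (K j)\<^sup>2)) * D)\<^sup>2"
    using D by (simp add: power_mult_distrib sum_distrib_right[symmetric] mult.assoc sum_nonneg)
  finally have "sqrt (suminf (wpos n (\<lambda>i. \<Sum>j\<in>J. f j i))) \<le> sqrt ((sqrt (real (card J) * (\<Sum>j\<in>J. (K j)\<^sup>2)) * D)\<^sup>2)"
    by (rule real_sqrt_le_mono)
  also have "\<dots> = sqrt (real (card J) * (\<Sum>j\<in>J. (K j)\<^sup>2)) * D"
    using D by (simp add: sum_nonneg)
  finally show ?thesis by (simp add: snorm_def)
qed

lemma comp_bound: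
  assumes fin: "finite J" and u: "\<And>j. j \<in> J \<Longrightarrow> u j \<in> Schwartz" and v: "\<And>j. j \<in> J \<Longrightarrow> v j \<in> Schwartz"
  shows "\<exists>K\<ge>0. \<forall>\<xi>\<in>Hneg k. opsum (\<lambda>j. sprod (u j) (v j)) J \<xi> \<in> s_space
     \<and> snorm n (opsum (\<lambda>j. sprod (u j) (v j)) J \<xi>) \<le> K * dnorm k \<xi>"
proof -
  have "\<forall>j\<in>J. \<exists>C. C \<ge> 0 \<and> (\<forall>\<zeta>\<in>Hneg k. snorm 0 (v j \<zeta>) \<le> C * dnorm k \<zeta>)"
    using Sch_bound[OF v] by blast
  then obtain Cv where Cv: "\<forall>j\<in>J. Cv j \<ge> 0 \<and> (\<forall>\<zeta>\<in>Hneg k. snorm 0 (v j \<zeta>) \<le> Cv j * dnorm k \<zeta>)"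
    by (rule bchoice[THEN exE]) blast
  have "\<forall>j\<in>J. \<exists>C. C \<ge> 0 \<and> (\<forall>\<zeta>\<in>Hneg 0. snorm n (u j \<zeta>) \<le> C * dnorm 0 \<zeta>)"
    using Sch_bound[OF u] by blast
  then obtain Cu where Cu: "\<forall>j\<in>J. Cu j \<ge> 0 \<and> (\<forall>\<zeta>\<in>Hneg 0. snorm n (u j \<zeta>) \<le> Cu j * dnorm 0 \<zeta>)"
    by (rule bchoice[THEN exE]) blast
  define K where "K j = (if j \<in> J then Cu j * Cv j else 0)" for j
  have K0: "0 \<le> K j" for j using Cu Cv by (simp add: K_def)
  show ?thesis
  proof (intro exI[of _ "sqrt (real (card J) * (\<Sum>j\<in>J. (K j)\<^sup>2))"] conjI ballI)
    show "0 \<le> sqrt (real (card J) * (\<Sum>j\<in>J. (K j)\<^sup>2))" by (simp add: sum_nonneg)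
    fix \<xi> assume xi: "\<xi> \<in> Hneg k"
    have xd: "\<xi> \<in> s_dual" using xi Hneg_dual[of k] by blast
    have e: "opsum (\<lambda>j. sprod (u j) (v j)) J \<xi> = (\<lambda>i. \<Sum>j\<in>J. u j (v j \<xi>) i)"
      by (simp add: opsum_def sprod_def)
    have vs: "v j \<xi> \<in> s_space" if "j \<in> J" for j by (rule Sch_map[OF v[OF that] xd])
    have us: "u j (v j \<xi>) \<in> s_space" if "j \<in> J" for j by (rule Sch_map[OF u[OF that] space_dual[OF vs[OF that]]])
    show "opsum (\<lambda>j. sprod (u j) (v j)) J \<xi> \<in> s_space"
      unfolding e by (rule sum_space[OF fin us])
    have bj: "snorm n (u j (v j \<xi>)) \<le> K j * dnorm k \<xi>" if j: "j \<in> J" for j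
    proof -
      have "snorm n (u j (v j \<xi>)) \<le> Cu j * dnorm 0 (v j \<xi>)"
        using Cu j space_Hneg(1)[OF vs[OF j]] by blast
      also have "\<dots> \<le> Cu j * snorm 0 (v j \<xi>)"
        using Cu j space_Hneg(2)[OF vs[OF j]] by (intro mult_left_mono) auto
      also have "\<dots> \<le> Cu j * (Cv j * dnorm k \<xi>)"
        using Cu Cv j xi by (intro mult_left_mono) auto
      finally show ?thesis using j by (simp add: K_def mult.assoc)
    qed
    show "snorm n (opsum (\<lambda>j. sprod (u j) (v j)) J \<xi>) \<le> sqrt (real (card J) * (\<Sum>j\<in>J. (K j)\<^sup>2)) * dnorm k \<xi>"
      unfolding e by (rule snorm_sum[OF fin us bj K0 dnorm_nonneg_ok[OF xi]])
  qed
qed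

lemma zero_Hneg: "(\<lambda>_. 0) \<in> Hneg k" by (rule finsupp_Hneg[of 0]) simp
lemma dnorm_zero: "dnorm k (\<lambda>_. 0) = 0" by (simp add: dnorm_def wneg_def)

lemma opnorm_facts:
  assumes sp: "\<forall>\<xi>\<in>Hneg k. z \<xi> \<in> s_space \<and> snorm k (z \<xi>) \<le> K * dnorm k \<xi>" and K: "K \<ge> 0"
  shows "\<And>\<xi>. \<xi> \<in> Hneg k \<Longrightarrow> dnorm k \<xi> \<le> 1 \<Longrightarrow> snorm k (z \<xi>) \<le> opnorm k z"
    "0 \<le> opnorm k z"
proof -
  define S where "S = {snorm k (z \<xi>) | \<xi>. \<xi> \<in> s_dual \<and> \<xi> \<in> Hneg k \<and> dnorm k \<xi> \<le> 1}"
  have bdd: "bdd_above S"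
  proof (rule bdd_aboveI)
    fix y assume "y \<in> S"
    then obtain \<xi> where "y = snorm k (z \<xi>)" "\<xi> \<in> Hneg k" "dnorm k \<xi> \<le> 1" by (auto simp: S_def)
    then show "y \<le> K" using sp K by (smt (verit) mult_left_le)
  qed
  show ge: "snorm k (z \<xi>) \<le> opnorm k z" if "\<xi> \<in> Hneg k" "dnorm k \<xi> \<le> 1" for \<xi>
  proof -
    have "snorm k (z \<xi>) \<in> S" using that Hneg_dual[of k] by (auto simp: S_def)
    then show ?thesis unfolding opnorm_def S_def[symmetric] by (rule cSup_upper[OF _ bdd])
  qed
  have "0 \<le> snorm k (z (\<lambda>_. 0))" using sp zero_Hneg snorm_nonneg by blast
  also have "\<dots> \<le> opnorm k z" by (rule ge) (auto simp: zero_Hneg dnorm_zero)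
  finally show "0 \<le> opnorm k z" .
qed

lemma opnorm_le:
  assumes "\<And>\<xi>. \<xi> \<in> Hneg k \<Longrightarrow> dnorm k \<xi> \<le> 1 \<Longrightarrow> snorm k (z \<xi>) \<le> M"
  shows "opnorm k z \<le> M"
  unfolding opnorm_def
proof (rule cSup_least)
  show "{snorm k (z \<xi>) |\<xi>. \<xi> \<in> s_dual \<and> \<xi> \<in> Hneg k \<and> dnorm k \<xi> \<le> 1} \<noteq> {}"
    using zero_Hneg[of k] Hneg_dual[of k] dnorm_zero[of k] by auto
qed (use assms in auto)

lemma Sch_opnorm_facts: assumes x: "x \<in> Schwartz"
  shows "\<And>\<xi>. \<xi> \<in> Hneg k \<Longrightarrow> dnorm k \<xi> \<le> 1 \<Longrightarrow> snorm k (x \<xi>) \<le> opnorm k x" "0 \<le> opnorm k x"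
proof -
  obtain C where C: "C \<ge> 0" "\<forall>\<xi>\<in>Hneg k. snorm k (x \<xi>) \<le> C * dnorm k \<xi>" using Sch_bound[OF x] by blast
  have sp: "\<forall>\<xi>\<in>Hneg k. x \<xi> \<in> s_space \<and> snorm k (x \<xi>) \<le> C * dnorm k \<xi>"
    using C Sch_map[OF x] Hneg_dual[of k] by blast
  show "\<And>\<xi>. \<xi> \<in> Hneg k \<Longrightarrow> dnorm k \<xi> \<le> 1 \<Longrightarrow> snorm k (x \<xi>) \<le> opnorm k x" "0 \<le> opnorm k x"
    using opnorm_facts[OF sp C(1)] by auto
qed



lemma pair_self: assumes "u \<in> s_space"
  shows "summable (\<lambda>i. (cmod (u i))\<^sup>2)" "pairing u u = of_real (\<Sum>i. (cmod (u i))\<^sup>2)"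
proof -
  have "summable (wpos 0 u)" using assms by (simp add: s_space_def)
  moreover have "wpos 0 u = (\<lambda>i. (cmod (u i))\<^sup>2)" by (simp add: fun_eq_iff wpos_def)
  ultimately show s: "summable (\<lambda>i. (cmod (u i))\<^sup>2)" by simp
  have e: "(\<lambda>i. u i * cnj (u i)) = (\<lambda>i. complex_of_real ((cmod (u i))\<^sup>2))"
    by (rule ext, rule complex_norm_square[symmetric])
  have "(\<lambda>i. complex_of_real ((cmod (u i))\<^sup>2)) sums complex_of_real (\<Sum>i. (cmod (u i))\<^sup>2)"
    by (rule sums_of_real[OF summable_sums[OF s]])
  then show "pairing u u = of_real (\<Sum>i. (cmod (u i))\<^sup>2)"
    unfolding pairing_def e by (rule sums_unique[symmetric])
qed

lemma pair_scale_self: assumes "u \<in> s_space"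
  shows "pairing (\<lambda>i. c * u i) u = c * of_real (\<Sum>i. (cmod (u i))\<^sup>2)"
proof -
  have e: "(\<lambda>i. u i * cnj (u i)) = (\<lambda>i. complex_of_real ((cmod (u i))\<^sup>2))"
    by (rule ext, rule complex_norm_square[symmetric])
  have s: "summable (\<lambda>i. u i * cnj (u i))" unfolding e
    using summable_of_real[OF pair_self(1)[OF assms]] .
  have "pairing (\<lambda>i. c * u i) u = (\<Sum>i. c * (u i * cnj (u i)))"
    unfolding pairing_def by (simp add: mult.assoc)
  also have "\<dots> = c * pairing u u" unfolding pairing_def by (rule suminf_mult[OF s])
  finally show ?thesis using pair_self(2)[OF assms] by simp
qed

lemma pow2K: "(t::real) ^ (2*K) = t ^ K * t ^ K"
  by (simp add: mult_2 power_add)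

lemma scaled_ev:
  fixes K b :: nat and c :: complex
  assumes cn: "cmod c = w b ^ K"
  defines "\<xi> \<equiv> (\<lambda>i. c * ev b i)"
  shows "\<xi> \<in> Hneg K" "dnorm K \<xi> = 1" "\<xi> \<in> s_dual"
proof -
  have e: "wneg K \<xi> = (\<lambda>i. if i = b then 1 else 0)"
  proof
    fix i
    show "wneg K \<xi> i = (if i = b then 1 else 0)"
    proof (cases "i = b")
      case True
      have "wneg K \<xi> i = (cmod c)\<^sup>2 / w b ^ (2*K)" using True by (simp add: wneg_def \<xi>_def ev_def)
      also have "\<dots> = (w b ^ K * w b ^ K) / (w b ^ K * w b ^ K)" by (simp only: cn pow2K power2_eq_square)
      also have "\<dots> = 1" by simp
      finally show ?thesis using True by simp
    next
      case False
      then show ?thesis by (simp add: wneg_def \<xi>_def ev_def)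
    qed
  qed
  have s: "wneg K \<xi> sums 1" unfolding e using sums_single[of b "\<lambda>_. 1::real"] by simp
  show h: "\<xi> \<in> Hneg K" using sums_summable[OF s] by (simp add: Hneg_def)
  show "dnorm K \<xi> = 1" using sums_unique[OF s] by (simp add: dnorm_def)
  show "\<xi> \<in> s_dual" using h Hneg_dual by blast
qed

lemma diag_col:
  assumes fin: "finite J" and x: "\<And>j. j \<in> J \<Longrightarrow> x j \<in> Schwartz"
  shows "w b ^ (2*K) * (\<Sum>j\<in>J. \<Sum>a. (cmod (x j (ev b) a))\<^sup>2)
     \<le> opnorm K (opsum (\<lambda>j. sprod (adj (x j)) (x j)) J)"
proof -
  define Z where "Z = opsum (\<lambda>j. sprod (adj (x j)) (x j)) J"
  have "\<exists>C\<ge>0. \<forall>\<xi>\<in>Hneg K. Z \<xi> \<in> s_space \<and> snorm K (Z \<xi>) \<le> C * dnorm K \<xi>"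
    unfolding Z_def by (rule comp_bound[OF fin]) (auto intro: adj_Sch x)
  then obtain C where C: "C \<ge> 0" "\<forall>\<xi>\<in>Hneg K. Z \<xi> \<in> s_space \<and> snorm K (Z \<xi>) \<le> C * dnorm K \<xi>"
    by blast
  define c where "c = complex_of_real (w b ^ K)"
  define \<xi> where "\<xi> = (\<lambda>i. c * ev b i)"
  have cn: "cmod c = w b ^ K" unfolding c_def norm_of_real by simp
  have xi: "\<xi> \<in> Hneg K" "dnorm K \<xi> = 1" "\<xi> \<in> s_dual" using scaled_ev[OF cn] by (simp_all add: \<xi>_def)
  define S where "S j = (\<Sum>a. (cmod (x j (ev b) a))\<^sup>2)" for j
  have S0: "0 \<le> S j" if "j \<in> J" for j
    unfolding S_def using pair_self(1)[OF Sch_map[OF x[OF that] ev_dual]] by (simp add: suminf_nonneg)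
  have comp: "adj (x j) (x j \<xi>) b = c * of_real (S j)" if j: "j \<in> J" for j
  proof -
    have u: "x j (ev b) \<in> s_space" by (rule Sch_map[OF x[OF j] ev_dual])
    have sc: "x j \<xi> = (\<lambda>i. c * x j (ev b) i)" unfolding \<xi>_def by (rule Sch_scale[OF x[OF j] ev_dual])
    have xd: "x j \<xi> \<in> s_dual" by (rule space_dual[OF Sch_map[OF x[OF j] xi(3)]])
    have "adj (x j) (x j \<xi>) b = pairing (adj (x j) (x j \<xi>)) (ev b)" by (simp add: pair_ev)
    also have "\<dots> = pairing (x j \<xi>) (x j (ev b))" by (rule adj_pair[OF x[OF j] xd ev_dual])
    also have "\<dots> = c * of_real (S j)" unfolding sc S_def by (rule pair_scale_self[OF u])
    finally show ?thesis .
  qed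
  have Zb: "Z \<xi> b = c * of_real (\<Sum>j\<in>J. S j)"
  proof -
    have "Z \<xi> b = (\<Sum>j\<in>J. adj (x j) (x j \<xi>) b)" by (simp add: Z_def opsum_def sprod_def)
    also have "\<dots> = (\<Sum>j\<in>J. c * of_real (S j))" using comp by simp
    also have "\<dots> = c * of_real (\<Sum>j\<in>J. S j)" by (simp add: sum_distrib_left)
    finally show ?thesis .
  qed
  have "cmod (Z \<xi> b) = w b ^ K * (\<Sum>j\<in>J. S j)"
    unfolding Zb norm_mult cn norm_of_real using S0 by (simp add: sum_nonneg)
  then have "w b ^ (2*K) * (\<Sum>j\<in>J. S j) = cmod (Z \<xi> b) * w b ^ K"
    unfolding pow2K by (simp add: ac_simps)
  also have "\<dots> \<le> snorm K (Z \<xi>)" using C xi by (intro coord) blast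
  also have "\<dots> \<le> opnorm K Z" using opnorm_facts(1)[OF C(2) C(1) xi(1)] xi(2) by simp
  finally show ?thesis by (simp add: S_def Z_def)
qed

lemma diag_row:
  assumes fin: "finite J" and x: "\<And>j. j \<in> J \<Longrightarrow> x j \<in> Schwartz"
  shows "w a ^ (2*K) * (\<Sum>j\<in>J. \<Sum>b. (cmod (x j (ev b) a))\<^sup>2)
     \<le> opnorm K (opsum (\<lambda>j. sprod (x j) (adj (x j))) J)"
proof -
  define W where "W = opsum (\<lambda>j. sprod (x j) (adj (x j))) J"
  have "\<exists>C\<ge>0. \<forall>\<xi>\<in>Hneg K. W \<xi> \<in> s_space \<and> snorm K (W \<xi>) \<le> C * dnorm K \<xi>"
    unfolding W_def by (rule comp_bound[OF fin]) (auto intro: adj_Sch x)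
  then obtain C where C: "C \<ge> 0" "\<forall>\<xi>\<in>Hneg K. W \<xi> \<in> s_space \<and> snorm K (W \<xi>) \<le> C * dnorm K \<xi>"
    by blast
  define c where "c = complex_of_real (w a ^ K)"
  define \<xi> where "\<xi> = (\<lambda>i. c * ev a i)"
  have cn: "cmod c = w a ^ K" unfolding c_def norm_of_real by simp
  have xi: "\<xi> \<in> Hneg K" "dnorm K \<xi> = 1" "\<xi> \<in> s_dual" using scaled_ev[OF cn] by (simp_all add: \<xi>_def)
  define S where "S j = (\<Sum>b. (cmod (x j (ev b) a))\<^sup>2)" for j
  have S0: "0 \<le> S j" if j: "j \<in> J" for j
  proof -
    have "summable (\<lambda>b. (cmod (adj (x j) (ev a) b))\<^sup>2)"
      by (rule pair_self(1)[OF Sch_map[OF adj_Sch[OF x[OF j]] ev_dual]])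
    moreover have "adj (x j) (ev a) b = cnj (x j (ev b) a)" for b
    proof -
      have "adj (x j) (ev a) b = pairing (adj (x j) (ev a)) (ev b)" by (simp add: pair_ev)
      also have "\<dots> = pairing (ev a) (x j (ev b))" by (rule adj_pair[OF x[OF j] ev_dual ev_dual])
      finally show ?thesis by (simp add: pair_ev2)
    qed
    ultimately show ?thesis unfolding S_def by (simp add: suminf_nonneg)
  qed
  have comp: "x j (adj (x j) \<xi>) a = c * of_real (S j)" if j: "j \<in> J" for j
  proof -
    define u where "u = adj (x j) (ev a)"
    have us: "u \<in> s_space" unfolding u_def by (rule Sch_map[OF adj_Sch[OF x[OF j]] ev_dual])
    have ud: "u \<in> s_dual" by (rule space_dual[OF us])
    have ub: "u b = cnj (x j (ev b) a)" for b
    proof -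
      have "u b = pairing (adj (x j) (ev a)) (ev b)" by (simp add: pair_ev u_def)
      also have "\<dots> = pairing (ev a) (x j (ev b))" by (rule adj_pair[OF x[OF j] ev_dual ev_dual])
      finally show ?thesis by (simp add: pair_ev2)
    qed
    have sc: "adj (x j) \<xi> = (\<lambda>i. c * u i)" unfolding \<xi>_def u_def
      by (rule Sch_scale[OF adj_Sch[OF x[OF j]] ev_dual])
    have sc2: "x j (\<lambda>i. c * u i) = (\<lambda>i. c * x j u i)" by (rule Sch_scale[OF x[OF j] ud])
    have "x j u a = cnj (pairing (ev a) (x j u))" by (simp add: pair_ev2)
    also have "\<dots> = cnj (pairing u u)" unfolding u_def
      by (subst adj_pair[OF x[OF j] ev_dual ud[unfolded u_def], symmetric]) (rule refl)
    also have "\<dots> = of_real (S j)" unfolding pair_self(2)[OF us] S_def by (simp add: ub)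
    finally show ?thesis by (simp add: sc sc2)
  qed
  have Wa: "W \<xi> a = c * of_real (\<Sum>j\<in>J. S j)"
  proof -
    have "W \<xi> a = (\<Sum>j\<in>J. x j (adj (x j) \<xi>) a)" by (simp add: W_def opsum_def sprod_def)
    also have "\<dots> = (\<Sum>j\<in>J. c * of_real (S j))" using comp by simp
    also have "\<dots> = c * of_real (\<Sum>j\<in>J. S j)" by (simp add: sum_distrib_left)
    finally show ?thesis .
  qed
  have "cmod (W \<xi> a) = w a ^ K * (\<Sum>j\<in>J. S j)"
    unfolding Wa norm_mult cn norm_of_real using S0 by (simp add: sum_nonneg)
  then have "w a ^ (2*K) * (\<Sum>j\<in>J. S j) = cmod (W \<xi> a) * w a ^ K"
    unfolding pow2K by (simp add: ac_simps)
  also have "\<dots> \<le> snorm K (W \<xi>)" using C xi by (intro coord) blast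
  also have "\<dots> \<le> opnorm K W" using opnorm_facts(1)[OF C(2) C(1) xi(1)] xi(2) by simp
  finally show ?thesis by (simp add: S_def W_def)
qed



lemma w_ge1: "1 \<le> w a" by simp
lemma w_pos: "0 < w a" by simp

lemma pow2m: "(t::real) ^ (2*m) = (t ^ m)\<^sup>2"
  by (metis power_mult mult.commute)

lemma sqbound:
  fixes e C s t :: real
  assumes e: "0 \<le> e" and b: "e \<le> C / (s^(m+1) * t^(m+1))" and s: "0 < s" and t: "0 < t"
  shows "e\<^sup>2 * s^(2*m) * t^(2*m) \<le> C\<^sup>2 * (1 / s\<^sup>2) * (1 / t\<^sup>2)"
proof -
  have "e * (s^m * t^m) \<le> C / (s^(m+1) * t^(m+1)) * (s^m * t^m)"
    using b s t by (intro mult_right_mono) auto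
  also have "\<dots> = C / (s * t)" using s t by (simp add: field_simps)
  finally have le: "e * (s^m * t^m) \<le> C / (s * t)" .
  have "(e * (s^m * t^m))\<^sup>2 \<le> (C / (s * t))\<^sup>2"
    using le e s t by (intro power_mono) auto
  then show ?thesis by (simp add: pow2m power_mult_distrib power_divide mult.assoc)
qed

lemma entry_dom: assumes x: "x \<in> Schwartz"
  shows "\<exists>C\<ge>0. \<forall>a b. (cmod (x (ev b) a))\<^sup>2 * w a ^ (2*(2*n)) * w b ^ (2*(2*n)) \<le> C * (1 / (w a)\<^sup>2) * (1 / (w b)\<^sup>2)"
proof -
  obtain C where C: "C \<ge> 0" "\<forall>a b. cmod (x (ev b) a) \<le> C / (w a ^ (2*n+1) * w b ^ (2*n+1))"
    using entry_bound[OF x] by blast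
  show ?thesis
  proof (intro exI[of _ "C\<^sup>2"] conjI allI)
    fix a b
    show "(cmod (x (ev b) a))\<^sup>2 * w a ^ (2*(2*n)) * w b ^ (2*(2*n)) \<le> C\<^sup>2 * (1 / (w a)\<^sup>2) * (1 / (w b)\<^sup>2)"
      by (rule sqbound) (use C in auto)
  qed simp
qed

lemma wmono: "i \<le> k \<Longrightarrow> w a ^ i \<le> w a ^ k"
  by (rule power_increasing) auto

lemma dom_le:
  assumes "i \<le> k" "j \<le> k" "(0::real) \<le> p"
  shows "p * w a ^ i * w b ^ j \<le> p * w a ^ k * w b ^ k"
  using assms by (intro mult_mono wmono) auto

lemma dtool:
  fixes F :: "nat \<Rightarrow> nat \<Rightarrow> real"
  assumes F0: "\<And>a b. 0 \<le> F a b" and Fb: "\<And>a b. F a b \<le> C * (1 / (w a)\<^sup>2) * (1 / (w b)\<^sup>2)"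
  shows "summable (F a)" "(\<Sum>b. F a b) \<le> C * (1 / (w a)\<^sup>2) * (pi\<^sup>2/6)"
    "summable (\<lambda>a. \<Sum>b. F a b)" "summable (\<lambda>a. F a b)" "summable (\<lambda>b. \<Sum>a. F a b)"
    "(\<Sum>a. \<Sum>b. F a b) = (\<Sum>b. \<Sum>a. F a b)"
    "0 \<le> (\<Sum>b. F a b)"
proof -
  have C0: "0 \<le> C" using F0[of 0 0] Fb[of 0 0] by (simp add: zero_le_mult_iff)
  note sq = inv_sq_summable
  have s1: "summable (\<lambda>b. C * (1 / (w a)\<^sup>2) * (1 / (w b)\<^sup>2))" for a by (rule summable_mult[OF sq(1)])
  show sa: "summable (F a)" for a
    by (rule summable_comparison_test'[where N=0, OF s1]) (use F0 Fb in auto)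
  show le: "(\<Sum>b. F a b) \<le> C * (1 / (w a)\<^sup>2) * (pi\<^sup>2/6)" for a
  proof -
    have "(\<Sum>b. F a b) \<le> (\<Sum>b. C * (1 / (w a)\<^sup>2) * (1 / (w b)\<^sup>2))"
      by (rule suminf_le[OF Fb sa s1])
    also have "\<dots> = C * (1 / (w a)\<^sup>2) * (pi\<^sup>2/6)" by (simp only: suminf_mult[OF sq(1)] sq(2))
    finally show ?thesis .
  qed
  show nn: "0 \<le> (\<Sum>b. F a b)" for a by (rule suminf_nonneg[OF sa F0])
  have s2: "summable (\<lambda>a. C * (pi\<^sup>2/6) * (1 / (w a)\<^sup>2))" by (rule summable_mult[OF sq(1)])
  show "summable (\<lambda>a. \<Sum>b. F a b)"
    by (rule summable_comparison_test'[where N=0, OF s2]) (use le nn in \<open>auto simp: ac_simps\<close>)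
  have s3: "summable (\<lambda>a. C * (1 / (w a)\<^sup>2) * (1 / (w b)\<^sup>2))" for b
    by (rule summable_mult2[OF summable_mult[OF sq(1)]])
  show sb: "summable (\<lambda>a. F a b)" for b
    by (rule summable_comparison_test'[where N=0, OF s3]) (use F0 Fb in auto)
  have le2: "(\<Sum>a. F a b) \<le> C * (1 / (w b)\<^sup>2) * (pi\<^sup>2/6)" for b
  proof -
    have "(\<Sum>a. F a b) \<le> (\<Sum>a. C * (1 / (w a)\<^sup>2) * (1 / (w b)\<^sup>2))"
      by (rule suminf_le[OF Fb sb s3])
    also have "\<dots> = C * (1 / (w b)\<^sup>2) * (pi\<^sup>2/6)"
      by (simp only: suminf_mult2[OF summable_mult[OF sq(1)], symmetric] suminf_mult[OF sq(1)] sq(2)) simp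
    finally show ?thesis .
  qed
  have nn2: "0 \<le> (\<Sum>a. F a b)" for b by (rule suminf_nonneg[OF sb F0])
  show "summable (\<lambda>b. \<Sum>a. F a b)"
    by (rule summable_comparison_test'[where N=0, OF s2]) (use le2 nn2 in \<open>auto simp: ac_simps\<close>)
  show "(\<Sum>a. \<Sum>b. F a b) = (\<Sum>b. \<Sum>a. F a b)"
  proof (rule dsum_swap[where g="\<lambda>a. C * (1 / (w a)\<^sup>2)" and h="\<lambda>b. 1 / (w b)\<^sup>2"])
    show "summable (\<lambda>a. C * (1 / (w a)\<^sup>2))" by (rule summable_mult[OF sq(1)])
    show "summable (\<lambda>b. 1 / (w b)\<^sup>2)" by (rule sq(1))
  qed (use F0 Fb C0 in auto)
qed



definition Hs :: "nat \<Rightarrow> op \<Rightarrow> real" where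
  "Hs n x = (\<Sum>a. \<Sum>b. (cmod (x (ev b) a))\<^sup>2 * w a ^ (2*n) * w b ^ (2*n))"

lemma dom_F:
  assumes C: "\<And>a b. p a b * w a ^ (2*(2*n)) * w b ^ (2*(2*n)) \<le> C * (1 / (w a)\<^sup>2) * (1 / (w b)\<^sup>2)"
    and p0: "\<And>a b. 0 \<le> p a b" and i: "i \<le> 2*(2*n)" and j: "j \<le> 2*(2*n)"
  shows "\<And>a b. 0 \<le> p a b * w a ^ i * w b ^ j"
    "\<And>a b. p a b * w a ^ i * w b ^ j \<le> C * (1 / (w a)\<^sup>2) * (1 / (w b)\<^sup>2)"
proof -
  fix a b
  show "0 \<le> p a b * w a ^ i * w b ^ j" using p0 by simp
  show "p a b * w a ^ i * w b ^ j \<le> C * (1 / (w a)\<^sup>2) * (1 / (w b)\<^sup>2)"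
    using dom_le[OF i j p0] C order_trans by blast
qed

lemma HS_bound: assumes x: "x \<in> Schwartz" and xi: "\<xi> \<in> Hneg n" and d1: "dnorm n \<xi> \<le> 1"
  shows "snorm n (x \<xi>) \<le> sqrt (Hs n x)" "0 \<le> Hs n x"
proof -
  obtain C where C: "C \<ge> 0" "\<forall>a b. (cmod (x (ev b) a))\<^sup>2 * w a ^ (2*(2*n)) * w b ^ (2*(2*n)) \<le> C * (1 / (w a)\<^sup>2) * (1 / (w b)\<^sup>2)"
    using entry_dom[OF x, of n] by blast
  define p where "p a b = (cmod (x (ev b) a))\<^sup>2" for a b
  have Cp: "p a b * w a ^ (2*(2*n)) * w b ^ (2*(2*n)) \<le> C * (1 / (w a)\<^sup>2) * (1 / (w b)\<^sup>2)" for a b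
    using C(2) by (simp add: p_def)
  have p0: "0 \<le> p a b" for a b by (simp add: p_def)
  define F where "F a b = p a b * w a ^ (2*n) * w b ^ (2*n)" for a b
  define G where "G a b = p a b * w a ^ 0 * w b ^ (2*n)" for a b
  have F: "0 \<le> F a b" "F a b \<le> C * (1 / (w a)\<^sup>2) * (1 / (w b)\<^sup>2)" for a b
    unfolding F_def using dom_F[OF Cp p0, of "2*n" "2*n"] by auto
  have G: "0 \<le> G a b" "G a b \<le> C * (1 / (w a)\<^sup>2) * (1 / (w b)\<^sup>2)" for a b
    unfolding G_def using dom_F[OF Cp p0, of 0 "2*n"] by auto
  note dF = dtool[of F C, OF F(1) F(2)]
  note dG = dtool[of G C, OF G(1) G(2)]
  have Hs_eq: "Hs n x = (\<Sum>a. \<Sum>b. F a b)" by (simp add: Hs_def F_def p_def)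
  show "0 \<le> Hs n x" unfolding Hs_eq by (rule suminf_nonneg[OF dF(3) dF(7)])
  have xs: "x \<xi> \<in> s_space" by (rule Sch_map[OF x]) (use xi Hneg_dual in blast)
  have pt: "wpos n (x \<xi>) a \<le> (\<Sum>b. F a b)" for a
  proof -
    define f where "f b = cmod (\<xi> b) / w b ^ n" for b
    define g where "g b = cmod (x (ev b) a) * w b ^ n" for b
    have f2: "(\<lambda>b. (f b)\<^sup>2) = wneg n \<xi>"
      by (auto simp: fun_eq_iff f_def wneg_def power_divide power_mult[symmetric] mult.commute)
    have g2: "(\<lambda>b. (g b)\<^sup>2) = G a"
      by (auto simp: fun_eq_iff g_def G_def p_def power_mult_distrib pow2m)
    have fs: "summable (\<lambda>b. (f b)\<^sup>2)" unfolding f2 using xi by (simp add: Hneg_def)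
    have gs: "summable (\<lambda>b. (g b)\<^sup>2)" unfolding g2 by (rule dG(1))
    note cs = CS_series[of f g, OF _ _ fs gs]
    have fg: "(\<lambda>b. norm (\<xi> b * x (ev b) a)) = (\<lambda>b. f b * g b)"
      by (auto simp: fun_eq_iff f_def g_def norm_mult)
    have sn: "summable (\<lambda>b. norm (\<xi> b * x (ev b) a))" unfolding fg using cs(1) by (simp add: f_def g_def)
    have Gn0: "0 \<le> suminf (G a)" unfolding g2[symmetric] by (rule suminf_nonneg[OF gs]) simp
    have "x \<xi> a = (\<Sum>b. \<xi> b * x (ev b) a)"
      using sums_unique[OF rep[OF x]] xi Hneg_dual by blast
    then have "cmod (x \<xi> a) \<le> (\<Sum>b. norm (\<xi> b * x (ev b) a))"
      using summable_norm[OF sn] by simp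
    also have "\<dots> \<le> sqrt (\<Sum>b. (f b)\<^sup>2) * sqrt (\<Sum>b. (g b)\<^sup>2)"
      unfolding fg using cs(2) by (simp add: f_def g_def)
    also have "\<dots> = dnorm n \<xi> * sqrt (\<Sum>b. G a b)" unfolding f2 g2 by (simp add: dnorm_def)
    also have "\<dots> \<le> 1 * sqrt (\<Sum>b. G a b)"
      by (rule mult_right_mono[OF d1]) (simp add: Gn0)
    finally have le: "cmod (x \<xi> a) \<le> sqrt (\<Sum>b. G a b)" by simp
    have "(cmod (x \<xi> a))\<^sup>2 \<le> (sqrt (\<Sum>b. G a b))\<^sup>2"
      using le Gn0 by (intro power_mono) auto
    moreover have Gn: "0 \<le> suminf (G a)" unfolding g2[symmetric] by (rule suminf_nonneg[OF gs]) simp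
    ultimately have le2: "(cmod (x \<xi> a))\<^sup>2 \<le> (\<Sum>b. G a b)" by simp
    have "wpos n (x \<xi>) a = (cmod (x \<xi> a))\<^sup>2 * w a ^ (2*n)" by (simp add: wpos_def)
    also have "\<dots> \<le> (\<Sum>b. G a b) * w a ^ (2*n)" by (rule mult_right_mono[OF le2]) simp
    also have "\<dots> = (\<Sum>b. G a b * w a ^ (2*n))" by (rule suminf_mult2[OF dG(1)])
    also have "\<dots> = (\<Sum>b. F a b)" by (simp add: F_def G_def ac_simps)
    finally show ?thesis .
  qed
  have sw: "summable (wpos n (x \<xi>))" using xs by (simp add: s_space_def)
  have "suminf (wpos n (x \<xi>)) \<le> (\<Sum>a. \<Sum>b. F a b)"
    by (rule suminf_le[OF pt sw dF(3)])
  then show "snorm n (x \<xi>) \<le> sqrt (Hs n x)" unfolding snorm_def Hs_eq by (rule real_sqrt_le_mono)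
qed

lemma opnorm_le_Hs: assumes x: "x \<in> Schwartz"
  shows "opnorm n x \<le> sqrt (Hs n x)"
  by (rule opnorm_le) (rule HS_bound(1)[OF x])

lemma Hs_nonneg: assumes x: "x \<in> Schwartz" shows "0 \<le> Hs n x"
  using HS_bound(2)[OF x zero_Hneg] dnorm_zero by simp

lemma amgm2: assumes t: "0 < t" shows "(u::real) * v \<le> t/2 * u\<^sup>2 + 1/(2*t) * v\<^sup>2"
proof -
  have "0 \<le> (t*u - v)\<^sup>2" by simp
  then have h: "2*t*(u * v) \<le> t*(t*u\<^sup>2) + v\<^sup>2"
    by (simp add: power2_diff power_mult_distrib algebra_simps power2_eq_square)
  have e: "t/2 * u\<^sup>2 + 1/(2*t) * v\<^sup>2 = (t*(t*u\<^sup>2) + v\<^sup>2) / (2*t)"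
    using t by (simp add: field_simps power2_eq_square)
  have "u * v = (2*t*(u * v)) / (2*t)" using t by simp
  also have "\<dots> \<le> (t*(t*u\<^sup>2) + v\<^sup>2) / (2*t)" using h t by (intro divide_right_mono) auto
  finally show ?thesis using e by simp
qed

lemma amgm_opt:
  fixes L X Y :: real
  assumes h: "\<And>t. 0 < t \<Longrightarrow> L \<le> t * X + Y / t" and X: "0 \<le> X" and Y: "0 \<le> Y"
  shows "L \<le> 2 * sqrt (X * Y)"
proof (cases "X = 0 \<or> Y = 0")
  case False
  then have Xp: "0 < X" and Yp: "0 < Y" using X Y by auto
  define s where "s = sqrt X"
  define r where "r = sqrt Y"
  have sp: "0 < s" and rp: "0 < r" using Xp Yp by (simp_all add: s_def r_def)
  have Xs: "X = s\<^sup>2" and Yr: "Y = r\<^sup>2" using X Y by (simp_all add: s_def r_def)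
  have "L \<le> (r/s) * X + Y / (r/s)" using h[of "r/s"] sp rp by simp
  also have "\<dots> = 2 * (s * r)" unfolding Xs Yr using sp rp by (simp add: field_simps power2_eq_square)
  also have "\<dots> = 2 * sqrt (X * Y)" by (simp add: s_def r_def real_sqrt_mult)
  finally show ?thesis .
next
  case True
  have "L \<le> 0"
  proof (rule ccontr)
    assume "\<not> L \<le> 0"
    then have Lp: "0 < L" by simp
    show False
    proof (cases "X = 0")
      case True
      define t where "t = (Y + 1) / L"
      have tp: "0 < t" using Lp Y by (simp add: t_def)
      have "L \<le> Y / t" using h[OF tp] True by simp
      also have "\<dots> = Y * L / (Y + 1)" using Lp Y by (simp add: t_def)
      also have "\<dots> < L" using Lp Y by (simp add: field_simps)
      finally show False by simp
    next
      case False
      then have Y0: "Y = 0" using \<open>X = 0 \<or> Y = 0\<close> by simp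
      define t where "t = L / (X + 1)"
      have tp: "0 < t" using Lp X by (simp add: t_def)
      have "L \<le> t * X" using h[OF tp] Y0 by simp
      also have "\<dots> = L * X / (X + 1)" using Lp X by (simp add: t_def)
      also have "\<dots> < L" using Lp X by (simp add: field_simps)
      finally show False by simp
    qed
  qed
  moreover have "0 \<le> 2 * sqrt (X * Y)" using X Y by simp
  ultimately show ?thesis by linarith
qed



lemma aux_col: assumes h: "(s::real) ^ (2*(2*n+1)) * S \<le> A" and s: "0 < s"
  shows "S * s ^ (2*(2*n)) \<le> A * (1 / s\<^sup>2)"
proof -
  have e: "s ^ (2*(2*n+1)) = s ^ (2*(2*n)) * s\<^sup>2" by (simp add: power_add[symmetric])
  have "S * s ^ (2*(2*n)) = (s ^ (2*(2*n+1)) * S) / s\<^sup>2" using s by (simp add: e field_simps power2_eq_square)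
  also have "\<dots> \<le> A / s\<^sup>2" by (rule divide_right_mono[OF h]) simp
  finally show ?thesis by simp
qed

lemma core:
  fixes P :: "nat \<Rightarrow> nat \<Rightarrow> real"
  assumes P0: "\<And>a b. 0 \<le> P a b"
    and dom: "\<And>a b. P a b * w a ^ (2*(2*n)) * w b ^ (2*(2*n)) \<le> C * (1 / (w a)\<^sup>2) * (1 / (w b)\<^sup>2)"
    and col: "\<And>b. w b ^ (2*(2*n+1)) * (\<Sum>a. P a b) \<le> A"
    and row: "\<And>a. w a ^ (2*(2*n+1)) * (\<Sum>b. P a b) \<le> B"
    and A: "0 \<le> A" and B: "0 \<le> B"
  shows "(\<Sum>a. \<Sum>b. P a b * w a ^ (2*n) * w b ^ (2*n)) \<le> pi\<^sup>2/6 * sqrt (A * B)"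
proof -
  define c where "c = pi\<^sup>2/6"
  have c0: "0 \<le> c" by (simp add: c_def)
  define F0 where "F0 a b = P a b * w a ^ (2*n) * w b ^ (2*n)" for a b
  define F1 where "F1 a b = P a b * w a ^ 0 * w b ^ (2*(2*n))" for a b
  define F2 where "F2 a b = P a b * w a ^ (2*(2*n)) * w b ^ 0" for a b
  define F3 where "F3 a b = P a b * w a ^ 0 * w b ^ 0" for a b
  have h0: "0 \<le> F0 a b" "F0 a b \<le> C * (1 / (w a)\<^sup>2) * (1 / (w b)\<^sup>2)" for a b
    unfolding F0_def using dom_F[OF dom P0, of "2*n" "2*n"] by auto
  have h1: "0 \<le> F1 a b" "F1 a b \<le> C * (1 / (w a)\<^sup>2) * (1 / (w b)\<^sup>2)" for a b
    unfolding F1_def using dom_F[OF dom P0, of 0 "2*(2*n)"] by auto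
  have h2: "0 \<le> F2 a b" "F2 a b \<le> C * (1 / (w a)\<^sup>2) * (1 / (w b)\<^sup>2)" for a b
    unfolding F2_def using dom_F[OF dom P0, of "2*(2*n)" 0] by auto
  have h3: "0 \<le> F3 a b" "F3 a b \<le> C * (1 / (w a)\<^sup>2) * (1 / (w b)\<^sup>2)" for a b
    unfolding F3_def using dom_F[OF dom P0, of 0 0] by auto
  note d0 = dtool[OF h0(1) h0(2)]
  note d1 = dtool[OF h1(1) h1(2)]
  note d2 = dtool[OF h2(1) h2(2)]
  note d3 = dtool[OF h3(1) h3(2)]
  have Pcol: "summable (\<lambda>a. P a b)" for b using d3(4) by (simp add: F3_def)
  have Prow: "summable (\<lambda>b. P a b)" for a using d3(1) by (simp add: F3_def)
  note sq = inv_sq_summable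
  have S1: "(\<Sum>a. \<Sum>b. F1 a b) \<le> A * c"
  proof -
    have "(\<Sum>a. \<Sum>b. F1 a b) = (\<Sum>b. \<Sum>a. F1 a b)" by (rule d1(6))
    also have "\<dots> \<le> (\<Sum>b. A * (1 / (w b)\<^sup>2))"
    proof (rule suminf_le[OF _ d1(5) summable_mult[OF sq(1)]])
      fix b
      have "(\<Sum>a. F1 a b) = (\<Sum>a. P a b) * w b ^ (2*(2*n))"
        unfolding F1_def by (simp add: suminf_mult2[OF Pcol])
      also have "\<dots> \<le> A * (1 / (w b)\<^sup>2)"
        by (rule aux_col[OF col[of b] w_pos])
      finally show "(\<Sum>a. F1 a b) \<le> A * (1 / (w b)\<^sup>2)" .
    qed
    also have "\<dots> = A * c" by (simp only: suminf_mult[OF sq(1)] sq(2) c_def)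
    finally show ?thesis .
  qed
  have S2: "(\<Sum>a. \<Sum>b. F2 a b) \<le> B * c"
  proof -
    have "(\<Sum>a. \<Sum>b. F2 a b) \<le> (\<Sum>a. B * (1 / (w a)\<^sup>2))"
    proof (rule suminf_le[OF _ d2(3) summable_mult[OF sq(1)]])
      fix a
      have "(\<Sum>b. F2 a b) = (\<Sum>b. P a b) * w a ^ (2*(2*n))"
        unfolding F2_def by (simp add: suminf_mult2[OF Prow])
      also have "\<dots> \<le> B * (1 / (w a)\<^sup>2)"
        by (rule aux_col[OF row[of a] w_pos])
      finally show "(\<Sum>b. F2 a b) \<le> B * (1 / (w a)\<^sup>2)" .
    qed
    also have "\<dots> = B * c" by (simp only: suminf_mult[OF sq(1)] sq(2) c_def)
    finally show ?thesis .
  qed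
  have key: "(\<Sum>a. \<Sum>b. F0 a b) \<le> t * (A * c / 2) + (B * c / 2) / t" if t: "0 < t" for t
  proof -
    have pw: "F0 a b \<le> t/2 * F1 a b + 1/(2*t) * F2 a b" for a b
    proof -
      have "w a ^ (2*n) * w b ^ (2*n) = w b ^ (2*n) * w a ^ (2*n)" by simp
      also have "\<dots> \<le> t/2 * (w b ^ (2*n))\<^sup>2 + 1/(2*t) * (w a ^ (2*n))\<^sup>2" by (rule amgm2[OF t])
      finally have "P a b * (w a ^ (2*n) * w b ^ (2*n)) \<le> P a b * (t/2 * (w b ^ (2*n))\<^sup>2 + 1/(2*t) * (w a ^ (2*n))\<^sup>2)"
        by (rule mult_left_mono[OF _ P0])
      then show ?thesis unfolding F0_def F1_def F2_def pow2m[of "w b" "2*n"] pow2m[of "w a" "2*n"]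
        by (simp add: algebra_simps)
    qed
    have sc: "summable (\<lambda>b. t/2 * F1 a b + 1/(2*t) * F2 a b)" for a
      by (rule summable_add[OF summable_mult[OF d1(1)] summable_mult[OF d2(1)]])
    have inner: "(\<Sum>b. F0 a b) \<le> t/2 * (\<Sum>b. F1 a b) + 1/(2*t) * (\<Sum>b. F2 a b)" for a
    proof -
      have "(\<Sum>b. F0 a b) \<le> (\<Sum>b. t/2 * F1 a b + 1/(2*t) * F2 a b)"
        by (rule suminf_le[OF pw d0(1) sc])
      also have "\<dots> = t/2 * (\<Sum>b. F1 a b) + 1/(2*t) * (\<Sum>b. F2 a b)"
        by (simp only: suminf_add[OF summable_mult[OF d1(1)] summable_mult[OF d2(1)], symmetric]
              suminf_mult[OF d1(1)] suminf_mult[OF d2(1)])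
      finally show ?thesis .
    qed
    have sc2: "summable (\<lambda>a. t/2 * (\<Sum>b. F1 a b) + 1/(2*t) * (\<Sum>b. F2 a b))"
      by (rule summable_add[OF summable_mult[OF d1(3)] summable_mult[OF d2(3)]])
    have "(\<Sum>a. \<Sum>b. F0 a b) \<le> (\<Sum>a. t/2 * (\<Sum>b. F1 a b) + 1/(2*t) * (\<Sum>b. F2 a b))"
      by (rule suminf_le[OF inner d0(3) sc2])
    also have "\<dots> = t/2 * (\<Sum>a. \<Sum>b. F1 a b) + 1/(2*t) * (\<Sum>a. \<Sum>b. F2 a b)"
      by (simp only: suminf_add[OF summable_mult[OF d1(3)] summable_mult[OF d2(3)], symmetric]
            suminf_mult[OF d1(3)] suminf_mult[OF d2(3)])
    also have "\<dots> \<le> t/2 * (A * c) + 1/(2*t) * (B * c)"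
      using S1 S2 t by (intro add_mono mult_left_mono) auto
    also have "\<dots> = t * (A * c / 2) + (B * c / 2) / t" using t by (simp add: field_simps)
    finally show ?thesis .
  qed
  have "(\<Sum>a. \<Sum>b. F0 a b) \<le> 2 * sqrt ((A * c / 2) * (B * c / 2))"
    by (rule amgm_opt[OF key]) (use A B c0 in auto)
  also have "\<dots> = c * sqrt (A * B)"
  proof -
    have e: "(A * c / 2) * (B * c / 2) = (c/2)\<^sup>2 * (A * B)" by (simp add: power2_eq_square ac_simps)
    have "sqrt ((c/2)\<^sup>2 * (A * B)) = c/2 * sqrt (A * B)"
      using c0 by (simp only: real_sqrt_mult real_sqrt_abs)
    then show ?thesis unfolding e by simp
  qed
  finally show ?thesis by (simp add: F0_def c_def)
qed



lemma sum_Hs: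
  assumes fin: "finite J" and x: "\<And>j. j \<in> J \<Longrightarrow> x j \<in> Schwartz"
  shows "(\<Sum>j\<in>J. Hs n (x j)) \<le> pi\<^sup>2/6 * sqrt (opnorm (2*n+1) (opsum (\<lambda>j. sprod (adj (x j)) (x j)) J)
            * opnorm (2*n+1) (opsum (\<lambda>j. sprod (x j) (adj (x j))) J))"
proof -
  define A where "A = opnorm (2*n+1) (opsum (\<lambda>j. sprod (adj (x j)) (x j)) J)"
  define B where "B = opnorm (2*n+1) (opsum (\<lambda>j. sprod (x j) (adj (x j))) J)"
  define p where "p j a b = (cmod (x j (ev b) a))\<^sup>2" for j a b
  have "\<forall>j\<in>J. \<exists>C. C \<ge> 0 \<and> (\<forall>a b. (cmod (x j (ev b) a))\<^sup>2 * w a ^ (2*(2*n)) * w b ^ (2*(2*n)) \<le> C * (1 / (w a)\<^sup>2) * (1 / (w b)\<^sup>2))"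
    using entry_dom[OF x] by blast
  then obtain Cf where Cf: "\<forall>j\<in>J. Cf j \<ge> 0 \<and> (\<forall>a b. (cmod (x j (ev b) a))\<^sup>2 * w a ^ (2*(2*n)) * w b ^ (2*(2*n)) \<le> Cf j * (1 / (w a)\<^sup>2) * (1 / (w b)\<^sup>2))"
    by (rule bchoice[THEN exE]) blast
  have domj: "p j a b * w a ^ (2*(2*n)) * w b ^ (2*(2*n)) \<le> Cf j * (1 / (w a)\<^sup>2) * (1 / (w b)\<^sup>2)" if "j \<in> J" for j a b
    using Cf that by (simp add: p_def)
  have p0: "0 \<le> p j a b" for j a b by (simp add: p_def)
  define P where "P a b = (\<Sum>j\<in>J. p j a b)" for a b
  have P0: "0 \<le> P a b" for a b by (simp add: P_def sum_nonneg p0)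
  have dom: "P a b * w a ^ (2*(2*n)) * w b ^ (2*(2*n)) \<le> (\<Sum>j\<in>J. Cf j) * (1 / (w a)\<^sup>2) * (1 / (w b)\<^sup>2)" for a b
  proof -
    have "P a b * w a ^ (2*(2*n)) * w b ^ (2*(2*n)) = (\<Sum>j\<in>J. p j a b * w a ^ (2*(2*n)) * w b ^ (2*(2*n)))"
      by (simp add: P_def sum_distrib_right)
    also have "\<dots> \<le> (\<Sum>j\<in>J. Cf j * (1 / (w a)\<^sup>2) * (1 / (w b)\<^sup>2))"
      by (rule sum_mono) (rule domj)
    also have "\<dots> = (\<Sum>j\<in>J. Cf j) * (1 / (w a)\<^sup>2) * (1 / (w b)\<^sup>2)"
      by (simp only: sum_distrib_right)
    finally show ?thesis .
  qed
  have tj: "summable (\<lambda>b. p j a b * w a ^ (2*n) * w b ^ (2*n))"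
     "summable (\<lambda>a. \<Sum>b. p j a b * w a ^ (2*n) * w b ^ (2*n))"
     "summable (\<lambda>a. p j a b)" "summable (\<lambda>b. p j a b)" if j: "j \<in> J" for j a b
  proof -
    have h0: "0 \<le> p j a b * w a ^ (2*n) * w b ^ (2*n)"
       "p j a b * w a ^ (2*n) * w b ^ (2*n) \<le> Cf j * (1 / (w a)\<^sup>2) * (1 / (w b)\<^sup>2)" for a b
      using dom_F[of "p j" n "Cf j", OF domj[OF j] p0, of "2*n" "2*n"] by auto
    have h3: "0 \<le> p j a b * w a ^ 0 * w b ^ 0"
       "p j a b * w a ^ 0 * w b ^ 0 \<le> Cf j * (1 / (w a)\<^sup>2) * (1 / (w b)\<^sup>2)" for a b
      using dom_F[of "p j" n "Cf j", OF domj[OF j] p0, of 0 0] by auto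
    note d0 = dtool[OF h0(1) h0(2)]
    note d3 = dtool[OF h3(1) h3(2)]
    show "summable (\<lambda>b. p j a b * w a ^ (2*n) * w b ^ (2*n))" by (rule d0(1))
    show "summable (\<lambda>a. \<Sum>b. p j a b * w a ^ (2*n) * w b ^ (2*n))" by (rule d0(3))
    show "summable (\<lambda>a. p j a b)" using d3(4) by simp
    show "summable (\<lambda>b. p j a b)" using d3(1) by simp
  qed
  have Heq: "(\<Sum>j\<in>J. Hs n (x j)) = (\<Sum>a. \<Sum>b. P a b * w a ^ (2*n) * w b ^ (2*n))"
  proof -
    have "(\<Sum>j\<in>J. Hs n (x j)) = (\<Sum>j\<in>J. \<Sum>a. \<Sum>b. p j a b * w a ^ (2*n) * w b ^ (2*n))"
      by (simp add: Hs_def p_def)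
    also have "\<dots> = (\<Sum>a. \<Sum>j\<in>J. \<Sum>b. p j a b * w a ^ (2*n) * w b ^ (2*n))"
      by (rule suminf_sum[symmetric]) (rule tj(2))
    also have "\<dots> = (\<Sum>a. \<Sum>b. \<Sum>j\<in>J. p j a b * w a ^ (2*n) * w b ^ (2*n))"
      by (rule suminf_cong, rule suminf_sum[symmetric]) (rule tj(1))
    also have "\<dots> = (\<Sum>a. \<Sum>b. P a b * w a ^ (2*n) * w b ^ (2*n))"
      by (simp add: P_def sum_distrib_right)
    finally show ?thesis .
  qed
  have col: "w b ^ (2*(2*n+1)) * (\<Sum>a. P a b) \<le> A" for b
  proof -
    have "(\<Sum>a. P a b) = (\<Sum>j\<in>J. \<Sum>a. p j a b)"
      unfolding P_def by (rule suminf_sum) (rule tj(3))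
    moreover have "w b ^ (2*(2*n+1)) * (\<Sum>j\<in>J. \<Sum>a. (cmod (x j (ev b) a))\<^sup>2) \<le> A"
      unfolding A_def by (rule diag_col[OF fin]) (rule x)
    ultimately show ?thesis by (simp add: p_def)
  qed
  have row: "w a ^ (2*(2*n+1)) * (\<Sum>b. P a b) \<le> B" for a
  proof -
    have "(\<Sum>b. P a b) = (\<Sum>j\<in>J. \<Sum>b. p j a b)"
      unfolding P_def by (rule suminf_sum) (rule tj(4))
    moreover have "w a ^ (2*(2*n+1)) * (\<Sum>j\<in>J. \<Sum>b. (cmod (x j (ev b) a))\<^sup>2) \<le> B"
      unfolding B_def by (rule diag_row[OF fin]) (rule x)
    ultimately show ?thesis by (simp add: p_def)
  qed
  have A0: "0 \<le> A"
  proof -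
    have "\<exists>C\<ge>0. \<forall>\<xi>\<in>Hneg (2*n+1). opsum (\<lambda>j. sprod (adj (x j)) (x j)) J \<xi> \<in> s_space \<and>
        snorm (2*n+1) (opsum (\<lambda>j. sprod (adj (x j)) (x j)) J \<xi>) \<le> C * dnorm (2*n+1) \<xi>"
      by (rule comp_bound[OF fin]) (auto intro: adj_Sch x)
    then show ?thesis unfolding A_def using opnorm_facts(2) by blast
  qed
  have B0: "0 \<le> B"
  proof -
    have "\<exists>C\<ge>0. \<forall>\<xi>\<in>Hneg (2*n+1). opsum (\<lambda>j. sprod (x j) (adj (x j))) J \<xi> \<in> s_space \<and>
        snorm (2*n+1) (opsum (\<lambda>j. sprod (x j) (adj (x j))) J \<xi>) \<le> C * dnorm (2*n+1) \<xi>"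
      by (rule comp_bound[OF fin]) (auto intro: adj_Sch x)
    then show ?thesis unfolding B_def using opnorm_facts(2) by blast
  qed
  show ?thesis unfolding Heq A_def[symmetric] B_def[symmetric]
    by (rule core[OF P0 dom col row A0 B0])
qed

lemma opnorm_Z_nonneg:
  assumes fin: "finite J" and u: "\<And>j. j \<in> J \<Longrightarrow> u j \<in> Schwartz" and v: "\<And>j. j \<in> J \<Longrightarrow> v j \<in> Schwartz"
  shows "0 \<le> opnorm k (opsum (\<lambda>j. sprod (u j) (v j)) J)"
proof -
  have "\<exists>C\<ge>0. \<forall>\<xi>\<in>Hneg k. opsum (\<lambda>j. sprod (u j) (v j)) J \<xi> \<in> s_space \<and>
      snorm k (opsum (\<lambda>j. sprod (u j) (v j)) J \<xi>) \<le> C * dnorm k \<xi>"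
    by (rule comp_bound[OF fin u v])
  then show ?thesis using opnorm_facts(2) by blast
qed

lemma ident:
  fixes c X Y Z V :: real
  assumes "0 \<le> c" "0 \<le> X" "0 \<le> Y" "0 \<le> Z" "0 \<le> V"
  shows "sqrt (c * sqrt (X * Y)) * sqrt (c * sqrt (Z * V)) = c * X powr (1/4) * Y powr (1/4) * Z powr (1/4) * V powr (1/4)"
proof -
  have q: "sqrt (sqrt T) = T powr (1/4)" if "0 \<le> T" for T :: real
  proof -
    have "T powr (1/4) = (T powr (1/2)) powr (1/2)" by (simp add: powr_powr)
    also have "\<dots> = sqrt (sqrt T)" using that by (simp add: powr_half_sqrt)
    finally show ?thesis by simp
  qed
  have "sqrt (c * sqrt (X * Y)) * sqrt (c * sqrt (Z * V))
      = (sqrt c * sqrt c) * (sqrt (sqrt X) * sqrt (sqrt Y) * sqrt (sqrt Z) * sqrt (sqrt V))"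
    by (simp only: real_sqrt_mult mult.assoc mult.commute mult.left_commute)
  also have "\<dots> = c * (X powr (1/4) * Y powr (1/4) * Z powr (1/4) * V powr (1/4))"
    using assms by (simp add: q)
  finally show ?thesis by (simp add: mult.assoc)
qed

theorem proposition2p2:
  fixes n m :: nat and x y :: "nat \<Rightarrow> op"
  assumes "n \<ge> 1" and "m \<ge> 1"
    and "\<forall>j\<in>{1..m}. x j \<in> Schwartz" and "\<forall>j\<in>{1..m}. y j \<in> Schwartz"
  shows "(\<Sum>j=1..m. opnorm n (x j) * opnorm n (y j))
    \<le> pi\<^sup>2 / 6
      * opnorm (2*n+1) (opsum (\<lambda>j. sprod (adj (x j)) (x j)) {1..m}) powr (1/4)
      * opnorm (2*n+1) (opsum (\<lambda>j. sprod (x j) (adj (x j))) {1..m}) powr (1/4)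
      * opnorm (2*n+1) (opsum (\<lambda>j. sprod (adj (y j)) (y j)) {1..m}) powr (1/4)
      * opnorm (2*n+1) (opsum (\<lambda>j. sprod (y j) (adj (y j))) {1..m}) powr (1/4)"
proof -
  define J where "J = {1..m}"
  have fin: "finite J" by (simp add: J_def)
  have hx: "\<And>j. j \<in> J \<Longrightarrow> x j \<in> Schwartz" using assms(3) by (simp add: J_def)
  have hy: "\<And>j. j \<in> J \<Longrightarrow> y j \<in> Schwartz" using assms(4) by (simp add: J_def)
  define A1 where "A1 = opnorm (2*n+1) (opsum (\<lambda>j. sprod (adj (x j)) (x j)) J)"
  define B1 where "B1 = opnorm (2*n+1) (opsum (\<lambda>j. sprod (x j) (adj (x j))) J)"
  define A2 where "A2 = opnorm (2*n+1) (opsum (\<lambda>j. sprod (adj (y j)) (y j)) J)"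
  define B2 where "B2 = opnorm (2*n+1) (opsum (\<lambda>j. sprod (y j) (adj (y j))) J)"
  have A10: "0 \<le> A1" unfolding A1_def by (rule opnorm_Z_nonneg[OF fin]) (auto intro: adj_Sch hx)
  have B10: "0 \<le> B1" unfolding B1_def by (rule opnorm_Z_nonneg[OF fin]) (auto intro: adj_Sch hx)
  have A20: "0 \<le> A2" unfolding A2_def by (rule opnorm_Z_nonneg[OF fin]) (auto intro: adj_Sch hy)
  have B20: "0 \<le> B2" unfolding B2_def by (rule opnorm_Z_nonneg[OF fin]) (auto intro: adj_Sch hy)
  define c where "c = pi\<^sup>2 / 6"
  have c0: "0 \<le> c" by (simp add: c_def)
  define hX where "hX j = sqrt (Hs n (x j))" for j
  define hY where "hY j = sqrt (Hs n (y j))" for j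
  have Hx0: "0 \<le> Hs n (x j)" if "j \<in> J" for j by (rule Hs_nonneg[OF hx[OF that]])
  have Hy0: "0 \<le> Hs n (y j)" if "j \<in> J" for j by (rule Hs_nonneg[OF hy[OF that]])
  have "(\<Sum>j\<in>J. opnorm n (x j) * opnorm n (y j)) \<le> (\<Sum>j\<in>J. hX j * hY j)"
  proof (rule sum_mono)
    fix j assume j: "j \<in> J"
    show "opnorm n (x j) * opnorm n (y j) \<le> hX j * hY j"
      unfolding hX_def hY_def
      by (rule mult_mono[OF opnorm_le_Hs[OF hx[OF j]] opnorm_le_Hs[OF hy[OF j]]])
         (use Sch_opnorm_facts(2)[OF hx[OF j]] Sch_opnorm_facts(2)[OF hy[OF j]] Hx0[OF j] Hy0[OF j] in auto)
  qed
  also have "\<dots> \<le> sqrt (\<Sum>j\<in>J. Hs n (x j)) * sqrt (\<Sum>j\<in>J. Hs n (y j))"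
  proof -
    have "(\<Sum>j\<in>J. hX j * hY j)\<^sup>2 \<le> (\<Sum>j\<in>J. (hX j)\<^sup>2) * (\<Sum>j\<in>J. (hY j)\<^sup>2)"
      by (rule Cauchy_Schwarz_ineq_sum)
    also have "\<dots> = (\<Sum>j\<in>J. Hs n (x j)) * (\<Sum>j\<in>J. Hs n (y j))"
      using Hx0 Hy0 by (simp add: hX_def hY_def)
    finally have "(\<Sum>j\<in>J. hX j * hY j) \<le> sqrt ((\<Sum>j\<in>J. Hs n (x j)) * (\<Sum>j\<in>J. Hs n (y j)))"
      by (rule real_le_rsqrt)
    then show ?thesis by (simp add: real_sqrt_mult)
  qed
  also have "\<dots> \<le> sqrt (c * sqrt (A1 * B1)) * sqrt (c * sqrt (A2 * B2))"
  proof (rule mult_mono)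
    show "sqrt (\<Sum>j\<in>J. Hs n (x j)) \<le> sqrt (c * sqrt (A1 * B1))"
    proof (rule real_sqrt_le_mono)
      show "(\<Sum>j\<in>J. Hs n (x j)) \<le> c * sqrt (A1 * B1)"
        unfolding A1_def B1_def c_def by (rule sum_Hs[OF fin]) (rule hx)
    qed
    show "sqrt (\<Sum>j\<in>J. Hs n (y j)) \<le> sqrt (c * sqrt (A2 * B2))"
    proof (rule real_sqrt_le_mono)
      show "(\<Sum>j\<in>J. Hs n (y j)) \<le> c * sqrt (A2 * B2)"
        unfolding A2_def B2_def c_def by (rule sum_Hs[OF fin]) (rule hy)
    qed
  qed (use Hy0 in \<open>auto simp: c0 A10 B10 A20 B20 sum_nonneg\<close>)
  also have "\<dots> = c * A1 powr (1/4) * B1 powr (1/4) * A2 powr (1/4) * B2 powr (1/4)"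
    by (rule ident[OF c0 A10 B10 A20 B20])
  finally show ?thesis by (simp add: J_def A1_def B1_def A2_def B2_def c_def)
qed


end
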